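(* Lattices $-A_1+\langle6\rangle+t A_1$ are chiral for $t=0,1$ and achiral for $t\ge2$.
   Context: Here $0\le t\le 9$; $A_1$ is the root lattice $\langle2\rangle$, $-A_1=\langle-2\rangle$, $\langle6\rangle$ the rank one lattice with generator of square 6, $+$ orthogonal sum. For an even hyperbolic lattice $\mathbb L$ with $\operatorname{discr}_3\mathbb L=\mathbb Z/3$ and $\operatorname{discr}_2$ of period 2: $W$ is generated by reflections in 2-roots ($v^2=2$) and 6-roots ($v^2=6$, $v\cdot\mathbb L\subset3\mathbb Z$); cells $P$ are fundamental chambers of $W$ in the hyperbolic space, lifting to $\pm P^\#$ in the double cover. An automorphism is $P$-direct if it preserves $P^\#$, $\mathbb Z/3$-reversing if it acts as $-\operatorname{id}$ on $\operatorname{discr}_3\mathbb L$. $\mathbb L$ is achiral if it admits an automorphism that is $\mathbb Z/3$-reversing and $P$-direct for some cell $P$, chiral otherwise. *)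

theory Defs
  imports Complex_Main
begin

text \<open>The lattice L_t = -A1 + <6> + t A1 is realised as Z^(t+2) with diagonal Gram
matrix diag(-2, 6, 2, ..., 2).\<close>

definition dimL :: "nat \<Rightarrow> nat" where
  "dimL t = t + 2"

definition gramd :: "nat \<Rightarrow> real" where
  "gramd i = (if i = 0 then -2 else if i = 1 then 6 else 2)"

definition vecs :: "nat \<Rightarrow> (nat \<Rightarrow> real) set" where
  "vecs t = {x. \<forall>i\<ge>dimL t. x i = 0}"

definition lat :: "nat \<Rightarrow> (nat \<Rightarrow> real) set" where
  "lat t = {x \<in> vecs t. \<forall>i<dimL t. x i \<in> \<int>}"

definition form :: "nat \<Rightarrow> (nat \<Rightarrow> real) \<Rightarrow> (nat \<Rightarrow> real) \<Rightarrow> real" where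
  "form t x y = (\<Sum>i<dimL t. gramd i * x i * y i)"

definition dual :: "nat \<Rightarrow> (nat \<Rightarrow> real) set" where
  "dual t = {x \<in> vecs t. \<forall>y\<in>lat t. form t x y \<in> \<int>}"

definition matapp :: "nat \<Rightarrow> (nat \<Rightarrow> nat \<Rightarrow> int) \<Rightarrow> (nat \<Rightarrow> real) \<Rightarrow> (nat \<Rightarrow> real)" where
  "matapp t g x = (\<lambda>i. if i < dimL t then (\<Sum>j<dimL t. of_int (g i j) * x j) else 0)"

definition is_aut :: "nat \<Rightarrow> (nat \<Rightarrow> nat \<Rightarrow> int) \<Rightarrow> bool" where
  "is_aut t g \<longleftrightarrow> bij_betw (matapp t g) (lat t) (lat t) \<and>
     (\<forall>x\<in>lat t. \<forall>y\<in>lat t. form t (matapp t g x) (matapp t g y) = form t x y)"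

text \<open>Z/3-reversing: acts as -id on discr_3 L, the 3-primary part of L^*/L.\<close>
definition z3_reversing :: "nat \<Rightarrow> (nat \<Rightarrow> nat \<Rightarrow> int) \<Rightarrow> bool" where
  "z3_reversing t g \<longleftrightarrow>
     (\<forall>x\<in>dual t. (\<exists>k::nat. (\<lambda>i. 3 ^ k * x i) \<in> lat t) \<longrightarrow>
        (\<lambda>i. matapp t g x i + x i) \<in> lat t)"

definition is_root :: "nat \<Rightarrow> (nat \<Rightarrow> real) \<Rightarrow> bool" where
  "is_root t v \<longleftrightarrow> v \<in> lat t \<and>
     (form t v v = 2 \<or>
      (form t v v = 6 \<and> (\<forall>y\<in>lat t. \<exists>k::int. form t v y = 3 * of_int k)))"

text \<open>The negative cone of L tensor R; its rays form the double cover of the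
hyperbolic space (two sheets = the two components of the cone).\<close>
definition negcone :: "nat \<Rightarrow> (nat \<Rightarrow> real) set" where
  "negcone t = {x \<in> vecs t. form t x x < 0}"

text \<open>The lift P^# of the cell containing the generic point x: the connected component of
x in the complement of all mirrors of W within the sheet of the cone containing x
(equivalently, the set of points of that sheet on the same side of every mirror).\<close>
definition chamber :: "nat \<Rightarrow> (nat \<Rightarrow> real) \<Rightarrow> (nat \<Rightarrow> real) set" where
  "chamber t x = {y \<in> negcone t. form t x y < 0 \<and>
      (\<forall>v. is_root t v \<longrightarrow> sgn (form t y v) = sgn (form t x v))}"

definition is_cell_lift :: "nat \<Rightarrow> (nat \<Rightarrow> real) set \<Rightarrow> bool" where
  "is_cell_lift t C \<longleftrightarrow>
     (\<exists>x\<in>negcone t. (\<forall>v. is_root t v \<longrightarrow> form t x v \<noteq> 0) \<and> C = chamber t x)"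

definition achiral :: "nat \<Rightarrow> bool" where
  "achiral t \<longleftrightarrow> (\<exists>g C. is_aut t g \<and> z3_reversing t g \<and> is_cell_lift t C \<and>
                        matapp t g ` C = C)"

definition chiral :: "nat \<Rightarrow> bool" where
  "chiral t \<longleftrightarrow> \<not> achiral t"

end

theory Submission
  imports Defs
begin

definition ev :: "nat \<Rightarrow> nat \<Rightarrow> real" where "ev j = (\<lambda>i. if i = j then 1 else 0)"

lemma vecsD: "x \<in> vecs t \<Longrightarrow> dimL t \<le> i \<Longrightarrow> x i = 0"
  by (simp add: vecs_def)
lemma lat_vecs: "x \<in> lat t \<Longrightarrow> x \<in> vecs t"
  by (simp add: lat_def)
lemma latD: "x \<in> lat t \<Longrightarrow> i < dimL t \<Longrightarrow> x i \<in> \<int>"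
  by (simp add: lat_def)
lemma latI: "x \<in> vecs t \<Longrightarrow> (\<And>i. i < dimL t \<Longrightarrow> x i \<in> \<int>) \<Longrightarrow> x \<in> lat t"
  by (simp add: lat_def)
lemma ev_vecs: "j < dimL t \<Longrightarrow> ev j \<in> vecs t"
  by (auto simp: vecs_def ev_def)
lemma ev_lat: "j < dimL t \<Longrightarrow> ev j \<in> lat t"
  by (auto simp: lat_def vecs_def ev_def)
lemma form_ev: "form t x (ev j) = (if j < dimL t then gramd j * x j else 0)"
  by (simp add: form_def ev_def if_distrib cong: if_cong)
lemma form_sym: "form t x y = form t y x"
  unfolding form_def by (simp add: mult.commute mult.left_commute)
lemma form_lin: "form t (\<lambda>i. a * x i + y i) z = a * form t x z + form t y z"
  unfolding form_def by (simp add: algebra_simps sum.distrib sum_distrib_left)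
lemma form_lin2: "form t z (\<lambda>i. a * x i + y i) = a * form t z x + form t z y"
  using form_lin form_sym by metis
lemma form_scale: "form t (\<lambda>i. a * x i) z = a * form t x z"
  unfolding form_def by (simp add: algebra_simps sum_distrib_left)
lemma form_scale2: "form t z (\<lambda>i. a * x i) = a * form t z x"
  using form_scale form_sym by metis
lemma form_add: "form t (\<lambda>i. x i + y i) z = form t x z + form t y z"
  unfolding form_def by (simp add: algebra_simps sum.distrib)
lemma form_add2: "form t z (\<lambda>i. x i + y i) = form t z x + form t z y"
  using form_add form_sym by metis
lemma form_neg: "form t (\<lambda>i. - x i) z = - form t x z"
  unfolding form_def by (simp add: sum_negf)
lemma form_neg2: "form t z (\<lambda>i. - x i) = - form t z x"
  using form_neg form_sym by metis
lemma form_diff: "form t (\<lambda>i. x i - y i) z = form t x z - form t y z"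
  unfolding form_def by (simp add: algebra_simps sum_subtractf)
lemma form_diff2: "form t z (\<lambda>i. x i - y i) = form t z x - form t z y"
  using form_diff form_sym by metis
lemma gramd_int: "gramd i \<in> \<int>"
  by (simp add: gramd_def)
lemma form_int: "x \<in> lat t \<Longrightarrow> y \<in> lat t \<Longrightarrow> form t x y \<in> \<int>"
  unfolding form_def by (intro Ints_sum Ints_mult gramd_int) (auto dest: latD)

lemma form01: "t \<le> 1 \<Longrightarrow> x \<in> vecs t \<Longrightarrow> form t x y = -2*x 0*y 0 + 6*x 1*y 1 + 2*x 2*y 2"
proof -
  assume t: "t \<le> 1" and x: "x \<in> vecs t"
  consider "t = 0" | "t = 1" using t by linarith
  then show ?thesis
  proof cases
    case 1
    then have "x 2 = 0" using x by (simp add: vecs_def dimL_def)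
    then show ?thesis using 1 by (simp add: form_def dimL_def gramd_def eval_nat_numeral)
  next
    case 2
    then show ?thesis by (simp add: form_def dimL_def gramd_def eval_nat_numeral)
  qed
qed


lemma zero_vecs: "(\<lambda>i. 0) \<in> vecs t" by (simp add: vecs_def)
lemma lincomb_vecs: "x \<in> vecs t \<Longrightarrow> y \<in> vecs t \<Longrightarrow> (\<lambda>i. a * x i + y i) \<in> vecs t"
  by (simp add: vecs_def)
lemma scale_vecs: "x \<in> vecs t \<Longrightarrow> (\<lambda>i. a * x i) \<in> vecs t"
  by (simp add: vecs_def)
lemma add_vecs: "x \<in> vecs t \<Longrightarrow> y \<in> vecs t \<Longrightarrow> (\<lambda>i. x i + y i) \<in> vecs t"
  by (simp add: vecs_def)
lemma neg_vecs: "x \<in> vecs t \<Longrightarrow> (\<lambda>i. - x i) \<in> vecs t"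
  by (simp add: vecs_def)
lemma diff_vecs: "x \<in> vecs t \<Longrightarrow> y \<in> vecs t \<Longrightarrow> (\<lambda>i. x i - y i) \<in> vecs t"
  by (simp add: vecs_def)
lemma add_lat: "x \<in> lat t \<Longrightarrow> y \<in> lat t \<Longrightarrow> (\<lambda>i. x i + y i) \<in> lat t"
  by (auto simp: lat_def vecs_def)
lemma diff_lat: "x \<in> lat t \<Longrightarrow> y \<in> lat t \<Longrightarrow> (\<lambda>i. x i - y i) \<in> lat t"
  by (auto simp: lat_def vecs_def)
lemma neg_lat: "x \<in> lat t \<Longrightarrow> (\<lambda>i. - x i) \<in> lat t"
  by (auto simp: lat_def vecs_def)
lemma intscale_lat: "x \<in> lat t \<Longrightarrow> a \<in> \<int> \<Longrightarrow> (\<lambda>i. a * x i) \<in> lat t"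
  by (auto simp: lat_def vecs_def)

lemma vecs_decomp: "x \<in> vecs t \<Longrightarrow> x = (\<lambda>i. \<Sum>k<dimL t. x k * ev k i)"
proof
  fix i assume x: "x \<in> vecs t"
  show "x i = (\<Sum>k<dimL t. x k * ev k i)"
  proof (cases "i < dimL t")
    case True
    then show ?thesis by (simp add: ev_def if_distrib cong: if_cong)
  next
    case False
    then show ?thesis using x by (simp add: ev_def vecs_def)
  qed
qed

lemma form_sum: "form t (\<lambda>i. \<Sum>j\<in>J. c j * a j i) w = (\<Sum>j\<in>J. c j * form t (a j) w)"
  unfolding form_def
  by (simp add: sum_distrib_left sum_distrib_right mult_ac sum.swap[of _ J])

definition lin :: "nat \<Rightarrow> ((nat \<Rightarrow> real) \<Rightarrow> (nat \<Rightarrow> real)) \<Rightarrow> bool" where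
  "lin t f \<longleftrightarrow> (\<forall>x\<in>vecs t. \<forall>y\<in>vecs t. \<forall>a. f (\<lambda>i. a * x i + y i) = (\<lambda>i. a * f x i + f y i))"

definition iso :: "nat \<Rightarrow> ((nat \<Rightarrow> real) \<Rightarrow> (nat \<Rightarrow> real)) \<Rightarrow> ((nat \<Rightarrow> real) \<Rightarrow> (nat \<Rightarrow> real)) \<Rightarrow> bool" where
  "iso t f f' \<longleftrightarrow> lin t f \<and>
     (\<forall>x\<in>vecs t. f x \<in> vecs t \<and> f' x \<in> vecs t \<and> f' (f x) = x \<and> f (f' x) = x) \<and>
     (\<forall>x\<in>vecs t. \<forall>y\<in>vecs t. form t (f x) (f y) = form t x y) \<and>
     (\<forall>x\<in>lat t. f x \<in> lat t \<and> f' x \<in> lat t)"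

lemma linD: "lin t f \<Longrightarrow> x \<in> vecs t \<Longrightarrow> y \<in> vecs t \<Longrightarrow> f (\<lambda>i. a * x i + y i) = (\<lambda>i. a * f x i + f y i)"
  by (simp add: lin_def)

lemma lin_zero: "lin t f \<Longrightarrow> f (\<lambda>i. 0) = (\<lambda>i. 0)"
proof -
  assume l: "lin t f"
  have "f (\<lambda>i. 0) = (\<lambda>i. f (\<lambda>i. 0) i + f (\<lambda>i. 0) i)"
    using linD[OF l zero_vecs zero_vecs, of 1] by simp
  then show ?thesis by (metis (no_types, lifting) add_cancel_right_right ext)
qed

lemma lin_scale: "lin t f \<Longrightarrow> x \<in> vecs t \<Longrightarrow> f (\<lambda>i. a * x i) = (\<lambda>i. a * f x i)"
proof -
  assume l: "lin t f" and x: "x \<in> vecs t"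
  show ?thesis using linD[OF l x zero_vecs, of a] lin_zero[OF l] by simp
qed

lemma lin_add: "lin t f \<Longrightarrow> x \<in> vecs t \<Longrightarrow> y \<in> vecs t \<Longrightarrow> f (\<lambda>i. x i + y i) = (\<lambda>i. f x i + f y i)"
proof -
  assume l: "lin t f" and x: "x \<in> vecs t" and y: "y \<in> vecs t"
  have "f (\<lambda>i. 1 * x i + y i) = (\<lambda>i. 1 * f x i + f y i)"
    using l x y unfolding lin_def by blast
  then show ?thesis by simp
qed

lemma lin_neg: "lin t f \<Longrightarrow> x \<in> vecs t \<Longrightarrow> f (\<lambda>i. - x i) = (\<lambda>i. - f x i)"
  using lin_scale[of t f x "-1"] by simp

lemma lin_diff: "lin t f \<Longrightarrow> x \<in> vecs t \<Longrightarrow> y \<in> vecs t \<Longrightarrow> f (\<lambda>i. x i - y i) = (\<lambda>i. f x i - f y i)"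
proof -
  assume l: "lin t f" and x: "x \<in> vecs t" and y: "y \<in> vecs t"
  have "f (\<lambda>i. (-1) * y i + x i) = (\<lambda>i. (-1) * f y i + f x i)"
    using l x y unfolding lin_def by blast
  then show ?thesis by simp
qed

lemma isoD:
  assumes "iso t f f'"
  shows "lin t f" "\<And>x. x \<in> vecs t \<Longrightarrow> f x \<in> vecs t" "\<And>x. x \<in> vecs t \<Longrightarrow> f' x \<in> vecs t"
    "\<And>x. x \<in> vecs t \<Longrightarrow> f' (f x) = x" "\<And>x. x \<in> vecs t \<Longrightarrow> f (f' x) = x"
    "\<And>x y. x \<in> vecs t \<Longrightarrow> y \<in> vecs t \<Longrightarrow> form t (f x) (f y) = form t x y"
    "\<And>x. x \<in> lat t \<Longrightarrow> f x \<in> lat t" "\<And>x. x \<in> lat t \<Longrightarrow> f' x \<in> lat t"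
  using assms unfolding iso_def by auto

lemma iso_sym: "iso t f f' \<Longrightarrow> iso t f' f"
proof -
  assume i: "iso t f f'"
  note D = isoD[OF i]
  have l: "lin t f'"
    unfolding lin_def
  proof (intro ballI allI)
    fix x y a assume x: "x \<in> vecs t" and y: "y \<in> vecs t"
    have "f (\<lambda>i. a * f' x i + f' y i) = (\<lambda>i. a * x i + y i)"
      using D(1) D(3)[OF x] D(3)[OF y] D(5)[OF x] D(5)[OF y] unfolding lin_def by auto
    then have "f' (f (\<lambda>i. a * f' x i + f' y i)) = f' (\<lambda>i. a * x i + y i)" by simp
    moreover have "(\<lambda>i. a * f' x i + f' y i) \<in> vecs t" using D(3)[OF x] D(3)[OF y] by (rule lincomb_vecs)
    ultimately show "f' (\<lambda>i. a * x i + y i) = (\<lambda>i. a * f' x i + f' y i)" using D(4) by metis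
  qed
  have f: "form t (f' x) (f' y) = form t x y" if "x \<in> vecs t" "y \<in> vecs t" for x y
    using D(6)[OF D(3)[OF that(1)] D(3)[OF that(2)]] D(5) that by simp
  show ?thesis unfolding iso_def using l f D by blast
qed

lemma iso_comp: "iso t f f' \<Longrightarrow> iso t g g' \<Longrightarrow> iso t (\<lambda>x. g (f x)) (\<lambda>x. f' (g' x))"
proof -
  assume i1: "iso t f f'" and i2: "iso t g g'"
  note A = isoD[OF i1] and B = isoD[OF i2]
  have l: "lin t (\<lambda>x. g (f x))" unfolding lin_def
  proof (intro ballI allI)
    fix x y a assume x: "x \<in> vecs t" and y: "y \<in> vecs t"
    have "f (\<lambda>i. a * x i + y i) = (\<lambda>i. a * f x i + f y i)" using A(1) x y unfolding lin_def by blast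
    moreover have "g (\<lambda>i. a * f x i + f y i) = (\<lambda>i. a * g (f x) i + g (f y) i)"
      using B(1) A(2)[OF x] A(2)[OF y] unfolding lin_def by blast
    ultimately show "g (f (\<lambda>i. a * x i + y i)) = (\<lambda>i. a * g (f x) i + g (f y) i)" by simp
  qed
  show ?thesis unfolding iso_def using l A B by simp
qed

lemma iso_id: "iso t (\<lambda>x. x) (\<lambda>x. x)"
  unfolding iso_def lin_def by simp

lemma iso_negid: "iso t (\<lambda>x i. - x i) (\<lambda>x i. - x i)"
  unfolding iso_def lin_def by (auto simp: neg_vecs neg_lat form_neg form_neg2)


lemma root_lat: "is_root t v \<Longrightarrow> v \<in> lat t" by (simp add: is_root_def)
lemma root_vecs: "is_root t v \<Longrightarrow> v \<in> vecs t" by (simp add: is_root_def lat_def)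
lemma root_norm: "is_root t v \<Longrightarrow> form t v v = 2 \<or> form t v v = 6" by (auto simp: is_root_def)
lemma root_pos: "is_root t v \<Longrightarrow> form t v v > 0" using root_norm by fastforce

lemma iso_root: "iso t f f' \<Longrightarrow> is_root t v \<Longrightarrow> is_root t (f v)"
proof -
  assume i: "iso t f f'" and r: "is_root t v"
  note D = isoD[OF i]
  have vl: "v \<in> lat t" using r by (simp add: is_root_def)
  have vv: "v \<in> vecs t" using vl by (simp add: lat_def)
  have n: "form t (f v) (f v) = form t v v" using D(6)[OF vv vv] .
  have d: "\<exists>k::int. form t (f v) y = 3 * of_int k" if "y \<in> lat t" "form t v v = 6" for y
  proof -
    have y': "f' y \<in> lat t" using D(8) that(1) .
    have "f (f' y) = y" using D(5) that(1) by (simp add: lat_def)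
    then have "form t (f v) y = form t v (f' y)" using D(6)[OF vv, of "f' y"] y' by (simp add: lat_def)
    moreover have "\<exists>k::int. form t v (f' y) = 3 * of_int k" using r y' that(2) unfolding is_root_def by auto
    then obtain k::int where "form t v (f' y) = 3 * of_int k" by blast
    ultimately show ?thesis by auto
  qed
  show ?thesis using r n d D(7)[OF vl] unfolding is_root_def by auto
qed

lemma iso_chamber:
  assumes i: "iso t f f'" and a: "a \<in> vecs t" and w: "w \<in> chamber t a"
  shows "f w \<in> chamber t (f a)"
proof -
  note D = isoD[OF i]
  note D' = isoD[OF iso_sym[OF i]]
  have wv: "w \<in> vecs t" and wn: "form t w w < 0" and aw: "form t a w < 0"
    and sg: "\<And>v. is_root t v \<Longrightarrow> sgn (form t w v) = sgn (form t a v)"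
    using w by (auto simp: chamber_def negcone_def)
  have "f w \<in> negcone t" using D(2)[OF wv] D(6)[OF wv wv] wn by (simp add: negcone_def)
  moreover have "form t (f a) (f w) < 0" using D(6)[OF a wv] aw by simp
  moreover have "sgn (form t (f w) v) = sgn (form t (f a) v)" if r: "is_root t v" for v
  proof -
    have r': "is_root t (f' v)" using iso_root[OF iso_sym[OF i] r] .
    have vv: "v \<in> vecs t" using root_vecs[OF r] .
    have fv: "f (f' v) = v" using D(5)[OF vv] .
    have "form t (f w) v = form t w (f' v)" using D(6)[OF wv D(3)[OF vv]] fv by simp
    moreover have "form t (f a) v = form t a (f' v)" using D(6)[OF a D(3)[OF vv]] fv by simp
    ultimately show ?thesis using sg[OF r'] by simp
  qed
  ultimately show ?thesis by (simp add: chamber_def)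
qed

lemma iso_dual: "iso t f f' \<Longrightarrow> u \<in> dual t \<Longrightarrow> f u \<in> dual t"
proof -
  assume i: "iso t f f'" and u: "u \<in> dual t"
  note D = isoD[OF i]
  have uv: "u \<in> vecs t" using u by (simp add: dual_def)
  have "form t (f u) y \<in> \<int>" if y: "y \<in> lat t" for y
  proof -
    have yv: "y \<in> vecs t" using y by (simp add: lat_def)
    have "form t (f u) y = form t u (f' y)" using D(6)[OF uv D(3)[OF yv]] D(5)[OF yv] by simp
    then show ?thesis using u D(8)[OF y] by (simp add: dual_def)
  qed
  then show ?thesis using D(2)[OF uv] by (simp add: dual_def)
qed

definition refl :: "nat \<Rightarrow> (nat \<Rightarrow> real) \<Rightarrow> (nat \<Rightarrow> real) \<Rightarrow> (nat \<Rightarrow> real)" where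
  "refl t v = (\<lambda>z i. z i - (2 * form t z v / form t v v) * v i)"

lemma form_sub_scale: "form t (\<lambda>i. z i - c * v i) w = form t z w - c * form t v w"
  unfolding form_def by (simp add: algebra_simps sum_subtractf sum_distrib_left)

lemma refl_form: "form t (refl t v z) w = form t z w - 2 * form t z v * form t v w / form t v v"
  unfolding refl_def using form_sub_scale[of t z "2 * form t z v / form t v v" v w] by simp

lemma refl_form_v: "form t v v \<noteq> 0 \<Longrightarrow> form t (refl t v z) v = - form t z v"
  by (simp add: refl_form form_sym[of t v z])

lemma iso_refl: assumes r: "is_root t v" shows "iso t (refl t v) (refl t v)"
proof -
  have N: "form t v v \<noteq> 0" using root_pos[OF r] by simp
  have vv: "v \<in> vecs t" using root_vecs[OF r] .
  have l: "lin t (refl t v)" unfolding lin_def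
  proof (intro ballI allI)
    fix x y a
    have "form t (\<lambda>i. a * x i + y i) v = a * form t x v + form t y v" by (rule form_lin)
    then show "refl t v (\<lambda>i. a * x i + y i) = (\<lambda>i. a * refl t v x i + refl t v y i)"
      unfolding refl_def by (intro ext) (simp add: add_divide_distrib algebra_simps)
  qed
  have vs: "refl t v z \<in> vecs t" if "z \<in> vecs t" for z
    using that vv unfolding refl_def vecs_def by auto
  have inv: "refl t v (refl t v z) = z" for z
  proof -
    have "form t (refl t v z) v = - form t z v" using refl_form_v[OF N] .
    then show ?thesis unfolding refl_def[of t v] by (rule_tac ext) (simp add: algebra_simps)
  qed
  have fm: "form t (refl t v x) (refl t v y) = form t x y" for x y
  proof -
    have "form t (refl t v x) (refl t v y) = form t x (refl t v y) - 2 * form t x v * form t v (refl t v y) / form t v v"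
      using refl_form .
    also have "form t v (refl t v y) = - form t y v" using refl_form_v[OF N] form_sym by metis
    also have "form t x (refl t v y) = form t x y - 2 * form t y v * form t v x / form t v v"
      using refl_form[of t v y x] form_sym by metis
    finally show ?thesis using N by (simp add: field_simps form_sym[of t v x])
  qed
  have lt: "refl t v z \<in> lat t" if z: "z \<in> lat t" for z
  proof -
    have c: "2 * form t z v / form t v v \<in> \<int>"
    proof (cases "form t v v = 2")
      case True
      then show ?thesis using form_int[OF z root_lat[OF r]] by simp
    next
      case False
      then have 6: "form t v v = 6" using root_norm[OF r] by simp
      then obtain k::int where "form t v z = 3 * of_int k" using r z unfolding is_root_def by auto
      then have "2 * form t z v / form t v v = of_int k" using 6 form_sym[of t z v] by simp
      then show ?thesis by simp
    qed
    have "refl t v z = (\<lambda>i. z i - (2 * form t z v / form t v v) * v i)" by (simp add: refl_def)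
    moreover have "(\<lambda>i. (2 * form t z v / form t v v) * v i) \<in> lat t"
      by (rule intscale_lat[OF root_lat[OF r] c])
    ultimately show ?thesis using diff_lat[OF z] by simp
  qed
  show ?thesis unfolding iso_def using l vs inv fm lt by (simp add: lat_def)
qed


lemma matapp_vecs: "matapp t g x \<in> vecs t" by (simp add: matapp_def vecs_def)
lemma matapp_lat: "x \<in> lat t \<Longrightarrow> matapp t g x \<in> lat t"
  by (rule latI[OF matapp_vecs]) (auto simp: matapp_def lat_def intro!: Ints_sum Ints_mult)
lemma matapp_lin: "lin t (matapp t g)"
  unfolding lin_def matapp_def by (auto simp: sum.distrib sum_distrib_left algebra_simps intro!: ext)
lemma matapp_sum: "matapp t g (\<lambda>i. \<Sum>k\<in>K. c k * a k i) = (\<lambda>i. \<Sum>k\<in>K. c k * matapp t g (a k) i)"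
  unfolding matapp_def by (auto simp: sum_distrib_left mult_ac sum.swap[of _ K] intro!: ext)
lemma form_ev_ev: "form t (ev l) (ev k) = (if k < dimL t \<and> l = k then gramd k else 0)"
  by (simp only: form_ev) (auto simp: ev_def)
lemma gramd_nz: "gramd i \<noteq> 0" by (simp add: gramd_def)

lemma aut_form:
  assumes a: "is_aut t h" and x: "x \<in> vecs t" and y: "y \<in> vecs t"
  shows "form t (matapp t h x) (matapp t h y) = form t x y"
proof -
  let ?H = "matapp t h" and ?n = "dimL t"
  have pres: "form t (?H (ev l)) (?H (ev k)) = form t (ev l) (ev k)" if "l < ?n" "k < ?n" for l k
    using a ev_lat[OF that(1)] ev_lat[OF that(2)] unfolding is_aut_def by blast
  have Hx: "?H x = (\<lambda>i. \<Sum>k<?n. x k * ?H (ev k) i)"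
    using matapp_sum[where K="{..<?n}" and c=x and a=ev] vecs_decomp[OF x] by simp
  have Hy: "?H y = (\<lambda>i. \<Sum>k<?n. y k * ?H (ev k) i)"
    using matapp_sum[where K="{..<?n}" and c=y and a=ev] vecs_decomp[OF y] by simp
  have inner: "form t (?H (ev k)) (?H y) = gramd k * y k" if k: "k < ?n" for k
  proof -
    have "form t (?H (ev k)) (?H y) = form t (?H y) (?H (ev k))" by (rule form_sym)
    also have "\<dots> = (\<Sum>l<?n. y l * form t (?H (ev l)) (?H (ev k)))"
      by (subst Hy) (rule form_sum)
    also have "\<dots> = (\<Sum>l<?n. y l * form t (ev l) (ev k))"
      by (rule sum.cong) (auto simp: pres k)
    also have "\<dots> = gramd k * y k" using k by (simp add: form_ev_ev if_distrib cong: if_cong)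
    finally show ?thesis .
  qed
  have "form t (?H x) (?H y) = (\<Sum>k<?n. x k * form t (?H (ev k)) (?H y))"
    by (subst Hx) (rule form_sum)
  also have "\<dots> = (\<Sum>k<?n. x k * (gramd k * y k))" by (rule sum.cong) (auto simp: inner)
  also have "\<dots> = form t x y" by (simp add: form_def mult_ac)
  finally show ?thesis .
qed

definition hinv :: "nat \<Rightarrow> (nat \<Rightarrow> nat \<Rightarrow> int) \<Rightarrow> (nat \<Rightarrow> real) \<Rightarrow> (nat \<Rightarrow> real)" where
  "hinv t h z = (\<lambda>i. if i < dimL t then form t z (matapp t h (ev i)) / gramd i else 0)"

lemma aut_iso:
  assumes a: "is_aut t h"
  shows "iso t (matapp t h) (hinv t h)"
proof -
  let ?H = "matapp t h" and ?n = "dimL t" and ?G = "hinv t h"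
  have bij: "bij_betw ?H (lat t) (lat t)" using a by (simp add: is_aut_def)
  have left: "?G (?H x) = x" if x: "x \<in> vecs t" for x
  proof
    fix i show "?G (?H x) i = x i"
    proof (cases "i < ?n")
      case True
      have "form t (?H x) (?H (ev i)) = form t x (ev i)" using aut_form[OF a x ev_vecs[OF True]] .
      then show ?thesis using True gramd_nz[of i] by (simp add: hinv_def form_ev)
    next
      case False then show ?thesis using x by (simp add: hinv_def vecs_def)
    qed
  qed
  have Gv: "?G z \<in> vecs t" for z by (simp add: hinv_def vecs_def)
  have Glat: "?G z \<in> lat t \<and> ?H (?G z) = z" if z: "z \<in> lat t" for z
  proof -
    obtain w where w: "w \<in> lat t" "?H w = z" using bij z unfolding bij_betw_def by (metis imageE)
    then have "?G z = w" using left[of w] by (simp add: lat_def)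
    then show ?thesis using w by simp
  qed
  have right: "?H (?G z) = z" if z: "z \<in> vecs t" for z
  proof -
    have Gs: "?G z = (\<lambda>i. \<Sum>k<?n. z k * ?G (ev k) i)"
    proof
      fix i show "?G z i = (\<Sum>k<?n. z k * ?G (ev k) i)"
      proof (cases "i < ?n")
        case True
        have "form t z (?H (ev i)) = (\<Sum>k<?n. z k * form t (ev k) (?H (ev i)))"
          by (subst vecs_decomp[OF z]) (rule form_sum)
        then show ?thesis using True by (simp add: hinv_def sum_divide_distrib)
      next
        case False then show ?thesis by (simp add: hinv_def)
      qed
    qed
    have "?H (?G z) = (\<lambda>i. \<Sum>k<?n. z k * ?H (?G (ev k)) i)"
      by (subst Gs) (rule matapp_sum)
    also have "\<dots> = (\<lambda>i. \<Sum>k<?n. z k * ev k i)"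
      by (intro ext sum.cong) (auto simp: Glat[OF ev_lat])
    also have "\<dots> = z" using vecs_decomp[OF z] by simp
    finally show ?thesis .
  qed
  show ?thesis unfolding iso_def
    using matapp_lin matapp_vecs Gv left right aut_form[OF a] matapp_lat Glat by blast
qed

lemma iso_aut:
  assumes i: "iso t (matapp t g) g'"
  shows "is_aut t g"
proof -
  note D = isoD[OF i]
  have inj: "inj_on (matapp t g) (lat t)"
    by (rule inj_on_inverseI[where g = g']) (simp add: D(4) lat_def)
  have "matapp t g ` lat t = lat t"
  proof
    show "matapp t g ` lat t \<subseteq> lat t" using matapp_lat by blast
    show "lat t \<subseteq> matapp t g ` lat t"
    proof
      fix z assume z: "z \<in> lat t"
      then have "z = matapp t g (g' z)" using D(5) by (simp add: lat_def)
      then show "z \<in> matapp t g ` lat t" using D(8)[OF z] by blast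
    qed
  qed
  then show ?thesis unfolding is_aut_def bij_betw_def using inj D(6) by (simp add: lat_def)
qed

lemma sq_lt_bound: fixes x m :: int assumes "x^2 < m^2" "0 \<le> m" shows "-m < x \<and> x < m"
proof -
  have "\<bar>x\<bar> < m"
  proof (rule ccontr)
    assume "\<not> \<bar>x\<bar> < m"
    then have "m^2 \<le> \<bar>x\<bar>^2" using assms(2) by (intro power_mono) auto
    then show False using assms(1) by simp
  qed
  then show ?thesis by auto
qed

lemma sqrt2_irr: "sqrt 2 \<notin> \<rat>"
proof
  assume "sqrt 2 \<in> \<rat>"
  then obtain a b :: int where b: "b > 0" and cop: "coprime a b" and eq: "sqrt 2 = of_int a / of_int b"
    by (rule Rats_cases')
  then have "sqrt 2 * of_int b = of_int a" by simp
  then have "(sqrt 2 * of_int b)^2 = (of_int a :: real)^2" by simp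
  then have "2 * (of_int b)^2 = (of_int a :: real)^2" by (simp add: power_mult_distrib)
  then have "real_of_int (2 * b^2) = real_of_int (a^2)" by simp
  then have e: "2 * b^2 = a^2" by (simp only: of_int_eq_iff)
  then have "even (a^2)" by (metis dvd_triv_left)
  then have "even a" by simp
  then obtain k where k: "a = 2 * k" by blast
  then have "b^2 = 2 * k^2" using e by (simp add: power_mult_distrib)
  then have "even (b^2)" by (metis dvd_triv_left)
  then have "even b" by simp
  then have "is_unit (2::int)" using coprime_common_divisor[OF cop] \<open>even a\<close> by blast
  then show False by simp
qed

lemma L2_aux:
  fixes a b c d :: int
  assumes h: "3*a + 3*b + c + d = 0"
  shows "0 \<le> 3*b^2+c^2+d^2-a^2"
    and "3*b^2+c^2+d^2-a^2 \<le> 3 \<Longrightarrow> 3*b^2+c^2+d^2-a^2 \<noteq> 1 \<and>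
          (3*b^2+c^2+d^2-a^2 = 3 \<longrightarrow> \<not> (3 dvd a \<and> 3 dvd c \<and> 3 dvd d))"
proof -
  have d: "d = -3*a - 3*b - c" using h by simp
  let ?q = "3*b^2+c^2+d^2-a^2"
  have id: "6*b^2+2*c^2+2*d^2-2*a^2 = (2*c + 3*a + 3*b)^2 + 7*a^2 + 18*(a*b) + 15*b^2"
    unfolding d by (simp add: power2_eq_square algebra_simps)
  have id2: "49*a^2 + 126*(a*b) + 105*b^2 = (7*a+9*b)^2 + 24*b^2"
    by (simp add: power2_eq_square algebra_simps)
  have id3: "105*a^2 + 270*(a*b) + 225*b^2 = (9*a+15*b)^2 + 24*a^2"
    by (simp add: power2_eq_square algebra_simps)
  have p1: "0 \<le> (7*a+9*b)^2" "0 \<le> (9*a+15*b)^2" "0 \<le> (2*c + 3*a + 3*b)^2" "0 \<le> b^2" "0 \<le> a^2" "0 \<le> d^2"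
    by simp_all
  show "0 \<le> ?q" using id id2 p1 by linarith
  assume q3: "?q \<le> 3"
  have "b^2 < 4" using id id2 p1 q3 by linarith
  then have b: "-2 < b \<and> b < 2" using sq_lt_bound[of b 2] by simp
  have "a^2 < 4" using id id3 p1 q3 by linarith
  then have a: "-2 < a \<and> a < 2" using sq_lt_bound[of a 2] by simp
  have A: "a \<in> {-1,0,1}" using a by auto
  then have "a^2 \<le> 1" by auto
  have "c^2 < 9" using q3 \<open>a^2 \<le> 1\<close> p1 by linarith
  then have c: "-3 < c \<and> c < 3" using sq_lt_bound[of c 3] by simp
  have B: "b \<in> {-1,0,1}" using b by auto
  have C: "c \<in> {-2,-1,0,1,2}" using c by auto
  show "?q \<noteq> 1 \<and> (?q = 3 \<longrightarrow> \<not> (3 dvd a \<and> 3 dvd c \<and> 3 dvd d))"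
    using A B C unfolding d by (simp add: power2_eq_square) (elim disjE; simp)
qed

lemma sum_split4: fixes f :: "nat \<Rightarrow> 'a::comm_monoid_add" and n :: nat
  assumes n: "4 \<le> n" shows "(\<Sum>j<n. f j) = f 0 + f 1 + f 2 + f 3 + (\<Sum>j\<in>{4..<n}. f j)"
proof -
  have "(\<Sum>j<n. f j) = (\<Sum>j\<in>{0..<4}. f j) + (\<Sum>j\<in>{4..<n}. f j)"
    using sum.atLeastLessThan_concat[of 0 4 n f] n by (simp add: lessThan_atLeast0)
  also have "(\<Sum>j\<in>{0..<4}. f j) = f 0 + f 1 + f 2 + f 3"
    by (simp add: eval_nat_numeral atLeast0LessThan)
  finally show ?thesis .
qed

definition gA :: "nat \<Rightarrow> nat \<Rightarrow> int" where
  "gA i j = (if i < 4 \<and> j < 4 then [[3,3,2,1],[-1,-1,-1,0],[-2,-3,-1,-1],[-1,0,-1,-1]] ! i ! j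
             else if i = j then 1 else 0)"

definition gAf :: "(nat \<Rightarrow> real) \<Rightarrow> (nat \<Rightarrow> real)" where
  "gAf x = (\<lambda>i. if i = 0 then 3*x 0 + 3*x 1 + 2*x 2 + x 3 else if i = 1 then - x 0 - x 1 - x 2
     else if i = 2 then -2*x 0 - 3*x 1 - x 2 - x 3 else if i = 3 then - x 0 - x 2 - x 3 else x i)"

lemma dimL_ge4: "2 \<le> t \<Longrightarrow> 4 \<le> dimL t" by (simp add: dimL_def)

lemma matapp_gA: assumes t: "2 \<le> t" and x: "x \<in> vecs t" shows "matapp t gA x = gAf x"
proof
  fix i
  have n: "4 \<le> dimL t" using dimL_ge4[OF t] .
  show "matapp t gA x i = gAf x i"
  proof (cases "i < 4")
    case True
    have z: "(\<Sum>j\<in>{4..<dimL t}. of_int (gA i j) * x j) = 0"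
      using True by (intro sum.neutral) (auto simp: gA_def)
    have "matapp t gA x i = of_int (gA i 0) * x 0 + of_int (gA i 1) * x 1 + of_int (gA i 2) * x 2 + of_int (gA i 3) * x 3"
      using True n z by (simp add: matapp_def sum_split4[OF n])
    moreover have "i = 0 \<or> i = 1 \<or> i = 2 \<or> i = 3" using True by auto
    ultimately show ?thesis by (auto simp: gA_def gAf_def)
  next
    case False
    show ?thesis
    proof (cases "i < dimL t")
      case True
      have gi: "gA i j = (if i = j then 1 else 0)" for j using False by (simp add: gA_def)
      have "(\<Sum>j<dimL t. of_int (gA i j) * x j) = (\<Sum>j<dimL t. (if i = j then x j else 0))"
        by (rule sum.cong) (auto simp: gi)
      then have "matapp t gA x i = (\<Sum>j<dimL t. (if i = j then x j else 0))"
        using True by (simp add: matapp_def)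
      also have "\<dots> = x i" using True by simp
      finally show ?thesis using False by (simp add: gAf_def)
    next
      case f2: False
      then show ?thesis using False x by (simp add: matapp_def gAf_def vecs_def)
    qed
  qed
qed

lemma form_split: assumes t: "2 \<le> t"
  shows "form t x y = -2*x 0*y 0 + 6*x 1*y 1 + 2*x 2*y 2 + 2*x 3*y 3 + (\<Sum>i\<in>{4..<dimL t}. 2 * x i * y i)"
proof -
  have "form t x y = (\<Sum>i<dimL t. gramd i * x i * y i)" by (simp add: form_def)
  also have "\<dots> = gramd 0 * x 0 * y 0 + gramd 1 * x 1 * y 1 + gramd 2 * x 2 * y 2 + gramd 3 * x 3 * y 3
      + (\<Sum>i\<in>{4..<dimL t}. gramd i * x i * y i)" by (rule sum_split4[OF dimL_ge4[OF t]])
  also have "(\<Sum>i\<in>{4..<dimL t}. gramd i * x i * y i) = (\<Sum>i\<in>{4..<dimL t}. 2 * x i * y i)"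
    by (rule sum.cong) (auto simp: gramd_def)
  finally show ?thesis by (simp add: gramd_def)
qed

lemma gAf_vecs: "2 \<le> t \<Longrightarrow> x \<in> vecs t \<Longrightarrow> gAf x \<in> vecs t"
  by (auto simp: vecs_def gAf_def dimL_def)

lemma iso_gA: assumes t: "2 \<le> t" shows "iso t (matapp t gA) (matapp t gA)"
proof -
  have inv: "matapp t gA (matapp t gA x) = x" if x: "x \<in> vecs t" for x
  proof -
    have "matapp t gA (matapp t gA x) = gAf (gAf x)"
      using matapp_gA[OF t x] matapp_gA[OF t gAf_vecs[OF t x]] by simp
    also have "\<dots> = x" by (rule ext) (simp add: gAf_def algebra_simps)
    finally show ?thesis .
  qed
  have fm: "form t (matapp t gA x) (matapp t gA y) = form t x y" if x: "x \<in> vecs t" and y: "y \<in> vecs t" for x y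
  proof -
    have tail: "(\<Sum>i\<in>{4..<dimL t}. 2 * gAf x i * gAf y i) = (\<Sum>i\<in>{4..<dimL t}. 2 * x i * y i)"
      by (rule sum.cong) (auto simp: gAf_def)
    show ?thesis unfolding matapp_gA[OF t x] matapp_gA[OF t y] form_split[OF t] tail
      by (simp add: gAf_def algebra_simps)
  qed
  show ?thesis unfolding iso_def using matapp_lin matapp_vecs inv fm matapp_lat by blast
qed

lemma int_of_2_3k: fixes y :: real assumes "2 * y \<in> \<int>" "3 ^ k * y \<in> \<int>" shows "y \<in> \<int>"
proof -
  have "odd ((3::nat) ^ k)" by simp
  then obtain m :: nat where m: "(3::nat) ^ k = 2 * m + 1" using oddE by blast
  have "(3::real) ^ k = 2 * of_nat m + 1" using m by (metis of_nat_numeral of_nat_power of_nat_Suc of_nat_mult of_nat_add of_nat_1)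
  then have "y = 3 ^ k * y - of_nat m * (2 * y)" by (simp add: algebra_simps)
  then show ?thesis using assms by (metis Ints_diff Ints_mult Ints_of_nat)
qed

lemma int_of_6_3k: fixes y :: real assumes "6 * y \<in> \<int>" "3 ^ k * y \<in> \<int>" shows "3 * y \<in> \<int>"
proof -
  have "2 * (3 * y) \<in> \<int>" using assms(1) by simp
  moreover have "3 ^ k * (3 * y) \<in> \<int>" using assms(2) Ints_mult[OF Ints_numeral[of "Num.Bit1 Num.One"] assms(2)]
    by (simp add: algebra_simps)
  ultimately show ?thesis by (rule int_of_2_3k)
qed

lemma rev_gA: assumes t: "2 \<le> t" shows "z3_reversing t gA"
  unfolding z3_reversing_def
proof (intro ballI impI)
  fix x assume xd: "x \<in> dual t" and "\<exists>k::nat. (\<lambda>i. 3 ^ k * x i) \<in> lat t"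
  then obtain k :: nat where k: "(\<lambda>i. 3 ^ k * x i) \<in> lat t" by blast
  have xv: "x \<in> vecs t" using xd by (simp add: dual_def)
  have n: "4 \<le> dimL t" using dimL_ge4[OF t] .
  have g: "gramd i * x i \<in> \<int>" if "i < dimL t" for i
    using xd ev_lat[OF that] form_ev[of t x i] that unfolding dual_def by auto
  have p: "3 ^ k * x i \<in> \<int>" if "i < dimL t" for i using latD[OF k that] by simp
  have xi: "x i \<in> \<int>" if "i < dimL t" "i \<noteq> 1" for i
  proof (rule int_of_2_3k[OF _ p[OF that(1)]])
    show "2 * x i \<in> \<int>"
    proof (cases "i = 0")
      case True then have "-(2 * x i) \<in> \<int>" using g[OF that(1)] by (simp add: gramd_def)
      then show ?thesis by (metis Ints_minus minus_minus)
    next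
      case False then show ?thesis using g[OF that(1)] that(2) by (simp add: gramd_def)
    qed
  qed
  have x1: "3 * x 1 \<in> \<int>"
    using int_of_6_3k[of "x 1" k] g[of 1] p[of 1] n by (simp add: gramd_def)
  have i0: "x 0 \<in> \<int>" "x 2 \<in> \<int>" "x 3 \<in> \<int>" using xi n by auto
  show "(\<lambda>i. matapp t gA x i + x i) \<in> lat t"
  proof (rule latI)
    show "(\<lambda>i. matapp t gA x i + x i) \<in> vecs t" using add_vecs[OF matapp_vecs xv] .
    fix i assume i: "i < dimL t"
    have e: "matapp t gA x i + x i = gAf x i + x i" using matapp_gA[OF t xv] by simp
    consider "i = 0" | "i = 1" | "i = 2" | "i = 3" | "4 \<le> i" by linarith
    then show "matapp t gA x i + x i \<in> \<int>"
    proof cases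
      case 1
      have "gAf x i + x i = 4 * x 0 + 3 * x 1 + 2 * x 2 + x 3" using 1 by (simp add: gAf_def)
      then show ?thesis using e i0 x1 by (metis Ints_add Ints_mult Ints_numeral)
    next
      case 2
      have "gAf x i + x i = - x 0 - x 2" using 2 by (simp add: gAf_def)
      then show ?thesis using e i0 by (metis Ints_diff Ints_minus)
    next
      case 3
      have "gAf x i + x i = - 2 * x 0 - 3 * x 1 - x 3" using 3 by (simp add: gAf_def)
      then show ?thesis using e i0 x1 by (metis Ints_diff Ints_mult Ints_numeral Ints_minus)
    next
      case 4
      have "gAf x i + x i = - x 0 - x 2" using 4 by (simp add: gAf_def)
      then show ?thesis using e i0 by (metis Ints_diff Ints_minus)
    next
      case 5
      have "gAf x i + x i = 2 * x i" using 5 by (simp add: gAf_def)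
      then show ?thesis using e xi[OF i] 5 by (metis Ints_mult Ints_numeral one_neq_zero not_less_eq_eq numeral_le_iff le_numeral_extra(4) Suc_n_not_le_n not_numeral_le_zero numeral_One less_numeral_extra(4) One_nat_def le_add2 order_trans eval_nat_numeral(2) nat.distinct(1) semiring_norm(26) zero_neq_numeral)
    qed
  qed
qed

definition xs :: "nat \<Rightarrow> nat \<Rightarrow> real" where
  "xs t = (\<lambda>i. if i = 0 then 3 else if i < 4 then -1 else if i < dimL t then sqrt 2 / 10 else 0)"

lemma xs_vecs: "2 \<le> t \<Longrightarrow> xs t \<in> vecs t"
  by (auto simp: xs_def vecs_def dimL_def)

lemma xs_fix: assumes t: "2 \<le> t" shows "matapp t gA (xs t) = xs t"
  unfolding matapp_gA[OF t xs_vecs[OF t]] by (rule ext) (simp add: gAf_def xs_def)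

lemma xs_neg: assumes t: "2 \<le> t" and t9: "t \<le> 9" shows "form t (xs t) (xs t) < 0"
proof -
  have "(\<Sum>i\<in>{4..<dimL t}. 2 * xs t i * xs t i) = (\<Sum>i\<in>{4..<dimL t}. 1/25)"
    by (rule sum.cong) (auto simp: xs_def power2_eq_square[symmetric])
  also have "\<dots> = real (t - 2) / 25" by (simp add: dimL_def)
  finally have tl: "(\<Sum>i\<in>{4..<dimL t}. 2 * xs t i * xs t i) = real (t - 2) / 25" .
  have "real (t - 2) \<le> 7" using t9 by simp
  then show ?thesis unfolding form_split[OF t] tl by (simp add: xs_def)
qed

lemma even_sq_sum: fixes w :: "nat \<Rightarrow> int"
  shows "even ((\<Sum>i\<in>A. (w i)^2) - (\<Sum>i\<in>A. w i))"
proof -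
  have "(\<Sum>i\<in>A. (w i)^2) - (\<Sum>i\<in>A. w i) = (\<Sum>i\<in>A. w i * (w i - 1))"
    by (simp add: sum_subtractf[symmetric] power2_eq_square algebra_simps)
  moreover have "even (\<Sum>i\<in>A. w i * (w i - 1))" by (rule dvd_sum) auto
  ultimately show ?thesis by simp
qed

lemma xs_generic: assumes t: "2 \<le> t" and r: "is_root t v" shows "form t (xs t) v \<noteq> 0"
proof
  assume F0: "form t (xs t) v = 0"
  let ?n = "dimL t"
  have n: "4 \<le> ?n" using dimL_ge4[OF t] .
  have vl: "v \<in> lat t" using root_lat[OF r] .
  define w where "w i = \<lfloor>v i\<rfloor>" for i
  have vw: "v i = of_int (w i)" if "i < ?n" for i
    using latD[OF vl that] unfolding w_def by (metis Ints_cases floor_of_int)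
  have vw0: "v 0 = of_int (w 0)" "v 1 = of_int (w 1)" "v 2 = of_int (w 2)" "v 3 = of_int (w 3)"
    by (rule vw, use n in linarith)+
  have vw1: "v (Suc 0) = of_int (w (Suc 0))" using vw0(2) by simp
  define SI where "SI = (\<Sum>i\<in>{4..<?n}. w i)"
  define Q where "Q = (\<Sum>i\<in>{4..<?n}. (w i)^2)"
  have S: "(\<Sum>i\<in>{4..<?n}. 2 * xs t i * v i) = (sqrt 2 / 5) * of_int SI"
  proof -
    have "(\<Sum>i\<in>{4..<?n}. 2 * xs t i * v i) = (\<Sum>i\<in>{4..<?n}. (sqrt 2 / 5) * of_int (w i))"
      by (rule sum.cong) (auto simp: xs_def vw)
    then show ?thesis by (simp add: SI_def sum_distrib_left)
  qed
  define N where "N = -6 * w 0 - 6 * w 1 - 2 * w 2 - 2 * w 3"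
  have F: "form t (xs t) v = of_int N + (sqrt 2 / 5) * of_int SI"
    unfolding form_split[OF t] S by (simp add: xs_def vw0 vw1 N_def)
  have SI0: "SI = 0"
  proof (rule ccontr)
    assume "SI \<noteq> 0"
    then have "sqrt 2 = - 5 * of_int N / of_int SI" using F F0 by (simp add: field_simps)
    then have "sqrt 2 \<in> \<rat>" by simp
    then show False using sqrt2_irr by simp
  qed
  then have "N = 0" using F F0 by simp
  then have h: "3 * w 0 + 3 * w 1 + w 2 + w 3 = 0" unfolding N_def by simp
  have Qe: "even Q" using even_sq_sum[of w "{4..<?n}"] SI0 unfolding Q_def SI_def by simp
  have Q0: "0 \<le> Q" unfolding Q_def by (rule sum_nonneg) simp
  define q where "q = 3 * (w 1)^2 + (w 2)^2 + (w 3)^2 - (w 0)^2"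
  have tl: "(\<Sum>i\<in>{4..<?n}. 2 * v i * v i) = 2 * of_int Q"
  proof -
    have "(\<Sum>i\<in>{4..<?n}. 2 * v i * v i) = (\<Sum>i\<in>{4..<?n}. 2 * of_int ((w i)^2))"
      by (rule sum.cong) (auto simp: vw power2_eq_square)
    then show ?thesis by (simp add: Q_def sum_distrib_left)
  qed
  have NV: "form t v v = 2 * of_int q + 2 * of_int Q"
    unfolding form_split[OF t] tl by (simp add: vw0 vw1 q_def power2_eq_square algebra_simps)
  have q0: "0 \<le> q" using L2_aux(1)[OF h] unfolding q_def .
  have q3: "q \<le> 3 \<Longrightarrow> q \<noteq> 1 \<and> (q = 3 \<longrightarrow> \<not> (3 dvd w 0 \<and> 3 dvd w 2 \<and> 3 dvd w 3))"
    using L2_aux(2)[OF h] unfolding q_def .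
  consider "form t v v = 2" | "form t v v = 6" using root_norm[OF r] by blast
  then show False
  proof cases
    case 1
    then have "q + Q = 1" using NV by linarith
    then have "Q = 0" using Qe Q0 q0 by presburger
    then show False using q3 \<open>q + Q = 1\<close> by simp
  next
    case 2
    then have qQ: "q + Q = 3" using NV by linarith
    then have "Q = 0 \<or> Q = 2" using Qe Q0 q0 by presburger
    moreover have "Q \<noteq> 2" using q3 qQ by auto
    ultimately have "q = 3" using qQ by simp
    have dv: "3 dvd w j" if j: "j = 0 \<or> j = 2 \<or> j = 3" for j
    proof -
      have jn: "j < ?n" using j n by auto
      obtain k :: int where k: "form t v (ev j) = 3 * of_int k"
        using r 2 ev_lat[OF jn] unfolding is_root_def by force
      have "form t v (ev j) = gramd j * of_int (w j)" using jn vw[OF jn] by (simp add: form_ev)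
      moreover have "\<exists>gi::int. gramd j = of_int gi \<and> (gi = 2 \<or> gi = -2)"
      proof (cases "j = 0")
        case True then show ?thesis by (intro exI[of _ "-2"]) (simp add: gramd_def)
      next
        case False then show ?thesis using j by (intro exI[of _ "2"]) (auto simp: gramd_def)
      qed
      then obtain gi :: int where gi: "gramd j = of_int gi" "gi = 2 \<or> gi = -2" by blast
      ultimately have "real_of_int (gi * w j) = real_of_int (3 * k)" using k gi(1) by simp
      then have "gi * w j = 3 * k" by (simp only: of_int_eq_iff)
      then have "2 * w j = 3 * k \<or> -2 * w j = 3 * k" using gi(2) by auto
      then show ?thesis by presburger
    qed
    then show False using q3 \<open>q = 3\<close> by auto
  qed
qed

theorem achiral_ge2: assumes t: "2 \<le> t" and t9: "t \<le> 9" shows "achiral t"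
proof -
  have i: "iso t (matapp t gA) (matapp t gA)" using iso_gA[OF t] .
  have xv: "xs t \<in> vecs t" using xs_vecs[OF t] .
  have cell: "is_cell_lift t (chamber t (xs t))"
    unfolding is_cell_lift_def
    using xv xs_neg[OF t t9] xs_generic[OF t] by (auto simp: negcone_def)
  have img: "matapp t gA ` chamber t (xs t) = chamber t (xs t)"
  proof
    show "matapp t gA ` chamber t (xs t) \<subseteq> chamber t (xs t)"
      using iso_chamber[OF i xv] xs_fix[OF t] by auto
    show "chamber t (xs t) \<subseteq> matapp t gA ` chamber t (xs t)"
    proof
      fix w assume w: "w \<in> chamber t (xs t)"
      then have wv: "w \<in> vecs t" by (simp add: chamber_def negcone_def)
      have "matapp t gA w \<in> chamber t (xs t)" using iso_chamber[OF i xv w] xs_fix[OF t] by simp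
      moreover have "w = matapp t gA (matapp t gA w)" using isoD(4)[OF i wv] by simp
      ultimately show "w \<in> matapp t gA ` chamber t (xs t)" by blast
    qed
  qed
  show ?thesis unfolding achiral_def using iso_aut[OF i] rev_gA[OF t] cell img by blast
qed

lemma dimL01: "t \<le> 1 \<Longrightarrow> dimL t \<le> 3" by (simp add: dimL_def)

lemma sheet:
  assumes t: "t \<le> 1" and z: "z \<in> vecs t" and w: "w \<in> vecs t"
    and zn: "form t z z < 0" and wn: "form t w w < 0"
  shows "form t z w < 0 \<longleftrightarrow> z 0 * w 0 > 0" and "form t z w \<noteq> 0"
proof -
  let ?A = "6 * z 1 * w 1 + 2 * z 2 * w 2"
  let ?Z = "6 * (z 1)^2 + 2 * (z 2)^2" and ?W = "6 * (w 1)^2 + 2 * (w 2)^2"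
  have fzw: "form t z w = -2 * z 0 * w 0 + ?A" using form01[OF t z] by simp
  have Zl: "?Z < 2 * (z 0)^2" using zn form01[OF t z, of z] by (simp add: power2_eq_square)
  have Wl: "?W < 2 * (w 0)^2" using wn form01[OF t w, of w] by (simp add: power2_eq_square)
  have Z0: "0 \<le> ?Z" and W0: "0 \<le> ?W" by simp_all
  have lag: "?Z * ?W - ?A^2 = 12 * (z 1 * w 2 - z 2 * w 1)^2"
    by (simp add: power2_eq_square algebra_simps)
  have "?A^2 \<le> ?Z * ?W" using lag by (smt (verit) zero_le_power2)
  also have "?Z * ?W \<le> ?Z * (2 * (w 0)^2)" using Z0 Wl by (intro mult_left_mono) auto
  also have "\<dots> < (2 * (z 0)^2) * (2 * (w 0)^2)"
  proof (rule mult_strict_right_mono[OF Zl])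
    show "0 < 2 * (w 0)^2" using W0 Wl by linarith
  qed
  finally have "?A^2 < (2 * z 0 * w 0)^2" by (simp add: power2_eq_square algebra_simps)
  then have "\<bar>?A\<bar>^2 < \<bar>2 * z 0 * w 0\<bar>^2" by simp
  then have Ab: "\<bar>?A\<bar> < \<bar>2 * z 0 * w 0\<bar>" by (rule power_less_imp_less_base) simp
  define P where "P = z 0 * w 0"
  define A where "A = ?A"
  have fzw': "form t z w = -2 * P + A" using fzw unfolding P_def A_def by simp
  have Ab': "\<bar>A\<bar> < 2 * \<bar>P\<bar>" using Ab unfolding P_def A_def by (simp add: abs_mult mult.assoc)
  show "form t z w < 0 \<longleftrightarrow> z 0 * w 0 > 0"
    unfolding P_def[symmetric] fzw' using Ab' by (cases "P \<ge> 0") (auto simp: abs_if split: if_splits)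
  show "form t z w \<noteq> 0" unfolding fzw' using Ab' by (cases "P \<ge> 0") (auto simp: abs_if split: if_splits)
qed

lemma sheet_trans:
  assumes t: "t \<le> 1" and a: "a \<in> vecs t" "form t a a < 0" and b: "b \<in> vecs t" "form t b b < 0"
    and c: "c \<in> vecs t" "form t c c < 0" and ab: "form t a b < 0" and bc: "form t b c < 0"
  shows "form t a c < 0"
proof -
  have "a 0 * b 0 > 0" using sheet(1)[OF t a(1) b(1) a(2) b(2)] ab by simp
  moreover have "b 0 * c 0 > 0" using sheet(1)[OF t b(1) c(1) b(2) c(2)] bc by simp
  ultimately have "a 0 * c 0 > 0"
    by (auto simp: zero_less_mult_iff)
  then show ?thesis using sheet(1)[OF t a(1) c(1) a(2) c(2)] by simp
qed

definition v3 :: "real \<Rightarrow> real \<Rightarrow> real \<Rightarrow> nat \<Rightarrow> real" where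
  "v3 a b c = (\<lambda>i. if i = 0 then a else if i = 1 then b else if i = 2 then c else 0)"

lemma vecs01_eq: assumes t: "t \<le> 1" and q: "q \<in> vecs t" shows "q = v3 (q 0) (q 1) (q 2)"
proof
  fix i :: nat
  consider "i = 0" | "i = 1" | "i = 2" | "3 \<le> i" by linarith
  then show "q i = v3 (q 0) (q 1) (q 2) i"
    using q dimL01[OF t] by cases (auto simp: v3_def vecs_def)
qed

lemma lat01_int: assumes t: "t \<le> 1" and q: "q \<in> lat t" and i: "i < 3" shows "q i \<in> \<int>"
proof (cases "i < dimL t")
  case True then show ?thesis using latD[OF q] by simp
next
  case False then show ?thesis using q by (simp add: lat_def vecs_def)
qed

lemma finite_box:
  assumes t: "t \<le> 1"
  shows "finite {q \<in> lat t. \<forall>i<3. \<bar>q i\<bar> \<le> B}"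
proof -
  let ?N = "\<lceil>B\<rceil>"
  let ?f = "\<lambda>(a::int, b::int, c::int). v3 (of_int a) (of_int b) (of_int c)"
  have "{q \<in> lat t. \<forall>i<3. \<bar>q i\<bar> \<le> B} \<subseteq> ?f ` ({-?N..?N} \<times> {-?N..?N} \<times> {-?N..?N})"
  proof
    fix q assume q: "q \<in> {q \<in> lat t. \<forall>i<3. \<bar>q i\<bar> \<le> B}"
    then have ql: "q \<in> lat t" and qb: "\<And>i. i < 3 \<Longrightarrow> \<bar>q i\<bar> \<le> B" by auto
    have qi: "q i = of_int \<lfloor>q i\<rfloor>" if "i < 3" for i
      using lat01_int[OF t ql that] by (metis Ints_cases floor_of_int)
    have bd: "\<lfloor>q i\<rfloor> \<in> {-?N..?N}" if "i < 3" for i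
    proof -
      have "\<bar>of_int \<lfloor>q i\<rfloor>\<bar> \<le> B" using qb[OF that] qi[OF that] by simp
      then have "-B \<le> of_int \<lfloor>q i\<rfloor> \<and> of_int \<lfloor>q i\<rfloor> \<le> B" by linarith
      then show ?thesis by (auto simp: le_ceiling_iff ceiling_le_iff) (metis ceiling_le_iff floor_le_ceiling le_ceiling_iff linorder_not_le minus_le_iff of_int_minus order_trans ceiling_minus floor_minus  less_ceiling_iff)
    qed
    have "q = ?f (\<lfloor>q 0\<rfloor>, \<lfloor>q 1\<rfloor>, \<lfloor>q 2\<rfloor>)"
      using vecs01_eq[OF t lat_vecs[OF ql]] qi[of 0] qi[of 1] qi[of 2] by simp
    then show "q \<in> ?f ` ({-?N..?N} \<times> {-?N..?N} \<times> {-?N..?N})"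
      using bd[of 0] bd[of 1] bd[of 2] by force
  qed
  then show ?thesis by (rule finite_subset) simp
qed


lemma orbit_bound:
  assumes t: "t \<le> 1" and x: "x \<in> vecs t" and xn: "form t x x < 0" and c: "c < 0"
    and q: "q \<in> vecs t" and qn: "form t q q = c" and xq: "form t x q < 0" and K: "- form t x q \<le> K"
  shows "\<forall>i<3. \<bar>q i\<bar> \<le> 2 * \<bar>x 0\<bar> * K / (- form t x x)"
proof -
  define X where "X = - form t x x"
  define D where "D = - form t x q"
  define A where "A = 6 * x 1 * q 1 + 2 * x 2 * q 2"
  define X' where "X' = 6 * (x 1)^2 + 2 * (x 2)^2"
  define Q' where "Q' = 6 * (q 1)^2 + 2 * (q 2)^2"
  have X0: "X > 0" using xn X_def by simp
  have D0: "0 < D" "D \<le> K" using xq K D_def by auto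
  have eA: "A = 2 * x 0 * q 0 - D" using form01[OF t x, of q] unfolding A_def D_def by simp
  have eX: "X' = 2 * (x 0)^2 - X" using form01[OF t x, of x] unfolding X'_def X_def by (simp add: power2_eq_square)
  have eQ: "Q' = 2 * (q 0)^2 + c" using form01[OF t q, of q] qn unfolding Q'_def by (simp add: power2_eq_square)
  have lag: "X' * Q' - A^2 = 12 * (x 1 * q 2 - x 2 * q 1)^2"
    unfolding X'_def Q'_def A_def by (simp add: power2_eq_square algebra_simps)
  have "A^2 \<le> X' * Q'" using lag by (smt (verit) zero_le_power2)
  also have "X' * Q' \<le> X' * (2 * (q 0)^2)"
    by (rule mult_left_mono) (use eQ c X'_def in auto)
  finally have e1: "(2 * x 0 * q 0 - D)^2 \<le> (2 * (x 0)^2 - X) * (2 * (q 0)^2)" using eA eX by simp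
  define P where "P = x 0 * q 0"
  have ex1: "(2 * x 0 * q 0 - D)^2 = 4 * P^2 - 4 * (P * D) + D^2"
    unfolding P_def by (simp add: power2_eq_square algebra_simps)
  have ex2: "(2 * (x 0)^2 - X) * (2 * (q 0)^2) = 4 * P^2 - 2 * (X * (q 0)^2)"
    unfolding P_def by (simp add: power2_eq_square algebra_simps)
  have m: "P * D \<le> \<bar>P\<bar> * K"
  proof -
    have "P * D \<le> \<bar>P\<bar> * D" using D0 by (intro mult_right_mono) auto
    also have "\<dots> \<le> \<bar>P\<bar> * K" using D0 by (intro mult_left_mono) auto
    finally show ?thesis .
  qed
  have "2 * (X * (q 0)^2) \<le> 4 * (\<bar>P\<bar> * K)"
    using e1 ex1 ex2 m zero_le_power2[of D] by linarith
  then have "2 * X * (q 0)^2 \<le> 4 * (\<bar>x 0\<bar> * K) * \<bar>q 0\<bar>"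
    unfolding P_def by (simp add: abs_mult algebra_simps)
  then have "\<bar>q 0\<bar> * (2 * X * \<bar>q 0\<bar>) \<le> \<bar>q 0\<bar> * (4 * (\<bar>x 0\<bar> * K))"
    by (simp add: power2_eq_square algebra_simps)
  then have b0: "\<bar>q 0\<bar> \<le> 2 * \<bar>x 0\<bar> * K / X"
  proof (cases "q 0 = 0")
    case True
    have "0 \<le> 2 * \<bar>x 0\<bar> * K / X" using D0 X0 by simp
    then show ?thesis using True by simp
  next
    case False
    then have "2 * X * \<bar>q 0\<bar> \<le> 4 * (\<bar>x 0\<bar> * K)"
      using \<open>\<bar>q 0\<bar> * (2 * X * \<bar>q 0\<bar>) \<le> \<bar>q 0\<bar> * (4 * (\<bar>x 0\<bar> * K))\<close> by simp
    then show ?thesis using X0 by (simp add: field_simps)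
  qed
  have "6 * (q 1)^2 \<le> 2 * (q 0)^2" "2 * (q 2)^2 \<le> 2 * (q 0)^2"
    using eQ c unfolding Q'_def by (smt (verit) zero_le_power2)+
  then have "(q 1)^2 \<le> (q 0)^2" "(q 2)^2 \<le> (q 0)^2" using zero_le_power2[of "q 1"] by linarith+
  then have "\<bar>q 1\<bar> \<le> \<bar>q 0\<bar>" "\<bar>q 2\<bar> \<le> \<bar>q 0\<bar>" by (simp_all add: abs_le_square_iff)
  note bb = this
  show ?thesis
  proof (intro allI impI)
    fix i :: nat assume "i < 3"
    then have "i = 0 \<or> i = 1 \<or> i = 2" by auto
    then show "\<bar>q i\<bar> \<le> 2 * \<bar>x 0\<bar> * K / (- form t x x)" using b0 bb unfolding X_def by auto
  qed
qed

lemma finite_orbit: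
  assumes t: "t \<le> 1" and x: "x \<in> vecs t" and xn: "form t x x < 0" and c: "c < 0"
  shows "finite {q \<in> lat t. form t q q = c \<and> form t x q < 0 \<and> - form t x q \<le> K}"
proof (rule finite_subset[OF _ finite_box[OF t, of "2 * \<bar>x 0\<bar> * K / (- form t x x)"]])
  show "{q \<in> lat t. form t q q = c \<and> form t x q < 0 \<and> - form t x q \<le> K}
      \<subseteq> {q \<in> lat t. \<forall>i<3. \<bar>q i\<bar> \<le> 2 * \<bar>x 0\<bar> * K / (- form t x x)}"
    using orbit_bound[OF t x xn c] lat_vecs by blast
qed

lemma descent:
  assumes t: "t \<le> 1" and pl: "p \<in> lat t" and pn: "form t p p < 0"
    and W: "\<forall>r\<in>W. is_root t r \<and> form t p r < 0"
    and x: "x \<in> vecs t" and xn: "form t x x < 0" and xg: "\<forall>v. is_root t v \<longrightarrow> form t x v \<noteq> 0"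
  shows "\<exists>f f'. iso t f f' \<and> (\<forall>r\<in>W. form t (f x) r < 0)"
proof -
  have pv: "p \<in> vecs t" using pl by (rule lat_vecs)
  define K0 where "K0 = \<bar>form t x p\<bar>"
  define M where "M = {q. (\<exists>h h'. iso t h h' \<and> q = h p) \<and> form t x q < 0 \<and> - form t x q \<le> K0}"
  have Msub: "M \<subseteq> {q \<in> lat t. form t q q = form t p p \<and> form t x q < 0 \<and> - form t x q \<le> K0}"
  proof
    fix q assume "q \<in> M"
    then obtain h h' where hh: "iso t h h'" "q = h p" and r: "form t x q < 0" "- form t x q \<le> K0"
      unfolding M_def by blast
    show "q \<in> {q \<in> lat t. form t q q = form t p p \<and> form t x q < 0 \<and> - form t x q \<le> K0}"
      using isoD(7)[OF hh(1) pl] isoD(6)[OF hh(1) pv pv] hh(2) r by simp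
  qed
  have finM: "finite M" using finite_subset[OF Msub finite_orbit[OF t x xn pn]] .
  have Mne: "M \<noteq> {}"
  proof -
    have "form t x p \<noteq> 0" using sheet(2)[OF t x pv xn pn] .
    then consider "form t x p < 0" | "form t x p > 0" by linarith
    then show ?thesis
    proof cases
      case 1
      then have "p \<in> M" unfolding M_def K0_def using iso_id[of t] by auto
      then show ?thesis by blast
    next
      case 2
      have "(\<lambda>i. - p i) \<in> M" unfolding M_def K0_def using iso_negid[of t] 2 by (auto simp: form_neg2)
      then show ?thesis by blast
    qed
  qed
  define q0 where "q0 = arg_min_on (\<lambda>q. - form t x q) M"
  have q0M: "q0 \<in> M" using arg_min_if_finite(1)[OF finM Mne] unfolding q0_def .
  have q0min: "\<And>q. q \<in> M \<Longrightarrow> - form t x q0 \<le> - form t x q"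
    using arg_min_if_finite(2)[OF finM Mne, of "\<lambda>q. - form t x q"] unfolding q0_def by force
  obtain h h' where hh: "iso t h h'" and q0h: "q0 = h p" and q0x: "form t x q0 < 0" and q0K: "- form t x q0 \<le> K0"
    using q0M unfolding M_def by blast
  note H = isoD[OF hh]
  have q0v: "q0 \<in> vecs t" using H(2)[OF pv] q0h by simp
  have q0n: "form t q0 q0 = form t p p" using H(6)[OF pv pv] q0h by simp
  have "form t (h' x) r < 0" if rW: "r \<in> W" for r
  proof (rule ccontr)
    assume neg: "\<not> form t (h' x) r < 0"
    have rr: "is_root t r" and pr: "form t p r < 0" using W rW by auto
    have rv: "r \<in> vecs t" using root_vecs[OF rr] .
    have e: "form t (h' x) r = form t x (h r)"
      using H(6)[OF H(3)[OF x] rv] H(5)[OF x] by simp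
    define u where "u = h r"
    have ur: "is_root t u" unfolding u_def using iso_root[OF hh rr] .
    have uv: "u \<in> vecs t" using root_vecs[OF ur] .
    have xu: "form t x u > 0" using neg e xg ur unfolding u_def by force
    have N: "form t u u > 0" using root_pos[OF ur] .
    have q0u: "form t q0 u = form t p r" unfolding u_def q0h using H(6)[OF pv rv] .
    have isc: "iso t (\<lambda>z. refl t u (h z)) (\<lambda>z. h' (refl t u z))" using iso_comp[OF hh iso_refl[OF ur]] .
    define q' where "q' = refl t u q0"
    have q'h: "q' = (\<lambda>z. refl t u (h z)) p" unfolding q'_def q0h by simp
    have q'v: "q' \<in> vecs t" using isoD(2)[OF iso_refl[OF ur] q0v] unfolding q'_def .
    have fx: "form t x q' = form t x q0 - 2 * form t q0 u * form t u x / form t u u"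
      unfolding q'_def using refl_form[of t u q0 x] form_sym[of t x "refl t u q0"] form_sym[of t q0 x] by simp
    have "2 * form t q0 u * form t u x / form t u u < 0"
      using q0u pr xu N form_sym[of t u x] by (simp add: divide_neg_pos mult_neg_pos)
    then have gt: "form t x q' > form t x q0" using fx by linarith
    have q'n: "form t q' q' = form t p p"
      unfolding q'_def using isoD(6)[OF iso_refl[OF ur] q0v q0v] q0n by simp
    have "form t q0 q' = form t q0 q0 - 2 * form t q0 u * form t u q0 / form t u u"
      unfolding q'_def using refl_form[of t u q0 q0] form_sym[of t q0 "refl t u q0"] by simp
    moreover have "2 * form t q0 u * form t u q0 / form t u u \<ge> 0"
    proof -
      have "form t u q0 = form t q0 u" by (rule form_sym)
      then have "2 * form t q0 u * form t u q0 / form t u u = 2 * (form t q0 u)^2 / form t u u"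
        by (simp add: power2_eq_square)
      then show ?thesis using N by simp
    qed
    ultimately have "form t q0 q' < 0" using q0n pn by linarith
    then have q'x: "form t x q' < 0"
      using sheet_trans[OF t x xn q0v _ q'v _ q0x] q0n q'n pn by simp
    have "q' \<in> M" unfolding M_def using isc q'h q'x gt q0K by auto
    then show False using q0min gt by force
  qed
  then show ?thesis using iso_sym[OF hh] by blast
qed

lemma chiral_main:
  assumes t: "t \<le> 1" and pl: "p \<in> lat t" and pn: "form t p p < 0"
    and W: "\<forall>r\<in>W. is_root t r \<and> form t p r < 0"
    and A1: "\<And>z. z \<in> vecs t \<Longrightarrow> \<forall>r\<in>W. form t z r < 0 \<Longrightarrow>
               form t z z < 0 \<and> form t p z < 0 \<and> (\<forall>v. is_root t v \<longrightarrow> form t z v \<noteq> 0)"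
    and LC: "\<And>F F'. iso t F F' \<Longrightarrow> \<forall>r\<in>W. form t (F p) r < 0 \<Longrightarrow> (\<lambda>i. (F (ev 1) i + ev 1 i) / 3) \<notin> lat t"
  shows "chiral t"
  unfolding chiral_def achiral_def
proof
  assume "\<exists>g C. is_aut t g \<and> z3_reversing t g \<and> is_cell_lift t C \<and> matapp t g ` C = C"
  then obtain g C where ga: "is_aut t g" and gr: "z3_reversing t g" and cC: "is_cell_lift t C"
    and gC: "matapp t g ` C = C" by blast
  obtain x where xc: "x \<in> negcone t" and xg: "\<forall>v. is_root t v \<longrightarrow> form t x v \<noteq> 0" and Cx: "C = chamber t x"
    using cC unfolding is_cell_lift_def by blast
  have xv: "x \<in> vecs t" and xn: "form t x x < 0" using xc by (auto simp: negcone_def)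
  have pv: "p \<in> vecs t" using pl by (rule lat_vecs)
  obtain f f' where ff: "iso t f f'" and fW: "\<forall>r\<in>W. form t (f x) r < 0"
    using descent[OF t pl pn W xv xn xg] by blast
  note FD = isoD[OF ff]
  have fi: "iso t f' f" using iso_sym[OF ff] .
  define y where "y = f x"
  have yv: "y \<in> vecs t" unfolding y_def using FD(2)[OF xv] .
  have yW: "\<forall>r\<in>W. form t y r < 0" using fW unfolding y_def .
  note Ay = A1[OF yv yW]
  have pW: "\<forall>r\<in>W. form t p r < 0" using W by auto
  note Ap = A1[OF pv pW]
  have sg: "sgn (form t p v) = sgn (form t y v)" if vr: "is_root t v" for v
  proof (rule ccontr)
    assume ne: "sgn (form t p v) \<noteq> sgn (form t y v)"
    define a where "a = form t y v"
    define b where "b = form t p v"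
    have a0: "a \<noteq> 0" using Ay vr unfolding a_def by blast
    have b0: "b \<noteq> 0" using Ap vr unfolding b_def by blast
    have opp: "\<bar>b\<bar> * a + \<bar>a\<bar> * b = 0"
      using ne a0 b0 unfolding a_def[symmetric] b_def[symmetric]
      by (cases "a > 0"; cases "b > 0") (auto simp: sgn_if abs_if split: if_splits)
    define z where "z = (\<lambda>i. \<bar>b\<bar> * y i + \<bar>a\<bar> * p i)"
    have zv: "z \<in> vecs t" unfolding z_def using lincomb_vecs[OF yv scale_vecs[OF pv]] by simp
    have fz: "form t z w = \<bar>b\<bar> * form t y w + \<bar>a\<bar> * form t p w" for w
      unfolding z_def using form_lin[of t "\<bar>b\<bar>" y "\<lambda>i. \<bar>a\<bar> * p i" w] form_scale[of t "\<bar>a\<bar>" p w] by simp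
    have "\<forall>r\<in>W. form t z r < 0"
    proof
      fix r assume r: "r \<in> W"
      have "\<bar>b\<bar> * form t y r < 0" using yW r b0 by (simp add: mult_pos_neg)
      moreover have "\<bar>a\<bar> * form t p r < 0" using pW r a0 by (simp add: mult_pos_neg)
      ultimately show "form t z r < 0" using fz by simp
    qed
    then have "form t z v \<noteq> 0" using A1[OF zv] vr by blast
    then show False using fz[of v] opp unfolding a_def b_def by simp
  qed
  have pchy: "p \<in> chamber t y"
    unfolding chamber_def negcone_def using pv pn Ay sg form_sym[of t y p] by auto
  have "f' y = x" unfolding y_def using FD(4)[OF xv] .
  then have hp: "f' p \<in> chamber t x" using iso_chamber[OF fi yv pchy] by simp
  have gi: "iso t (matapp t g) (hinv t g)" using aut_iso[OF ga] .
  have "matapp t g (f' p) \<in> chamber t x" using hp gC Cx by blast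
  then have Fp: "f (matapp t g (f' p)) \<in> chamber t y" using iso_chamber[OF ff xv] unfolding y_def by blast
  define F where "F = (\<lambda>z. f (matapp t g (f' z)))"
  have Fi: "iso t F (\<lambda>z. f (hinv t g (f' z)))"
    unfolding F_def using iso_comp[OF iso_comp[OF fi gi] ff] by simp
  have FW: "\<forall>r\<in>W. form t (F p) r < 0"
  proof
    fix r assume r: "r \<in> W"
    have "sgn (form t (F p) r) = sgn (form t y r)" using Fp W r unfolding F_def chamber_def by auto
    moreover have "form t y r < 0" using yW r by blast
    ultimately show "form t (F p) r < 0" by (simp add: sgn_if split: if_splits)
  qed
  have n1: "1 < dimL t" by (simp add: dimL_def)
  define u0 where "u0 = (\<lambda>i. (1/3) * ev 1 i)"
  have e1l: "ev 1 \<in> lat t" using ev_lat[OF n1] .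
  have e1v: "ev 1 \<in> vecs t" using ev_vecs[OF n1] .
  have u0v: "u0 \<in> vecs t" unfolding u0_def using scale_vecs[OF e1v] .
  have u0d: "u0 \<in> dual t"
  proof -
    have "form t u0 w \<in> \<int>" if w: "w \<in> lat t" for w
    proof -
      have "form t u0 w = (1/3) * form t w (ev 1)" unfolding u0_def using form_scale form_sym by metis
      also have "\<dots> = 2 * w 1" using n1 by (simp add: form_ev gramd_def)
      finally show ?thesis using latD[OF w n1] by simp
    qed
    then show ?thesis using u0v by (simp add: dual_def)
  qed
  define a where "a = f' u0"
  have av: "a \<in> vecs t" unfolding a_def using FD(3)[OF u0v] .
  have ad: "a \<in> dual t" unfolding a_def using iso_dual[OF fi u0d] .
  have "(\<lambda>i. 3 * u0 i) = ev 1" unfolding u0_def by auto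
  then have "(\<lambda>i. 3 * a i) = f' (ev 1)" unfolding a_def using lin_scale[OF isoD(1)[OF fi] u0v, of 3] by simp
  then have "(\<lambda>i. 3 ^ 1 * a i) \<in> lat t" using isoD(7)[OF fi e1l] by simp
  then have "(\<lambda>i. matapp t g a i + a i) \<in> lat t" using gr ad unfolding z3_reversing_def by blast
  define l where "l = (\<lambda>i. matapp t g a i + a i)"
  have ll: "l \<in> lat t" unfolding l_def by fact
  have lv: "l \<in> vecs t" using lat_vecs[OF ll] .
  have Ga: "matapp t g a = (\<lambda>i. l i - a i)" unfolding l_def by auto
  have "F u0 = f (\<lambda>i. l i - a i)" unfolding F_def a_def[symmetric] Ga ..
  also have "\<dots> = (\<lambda>i. f l i - f a i)" using lin_diff[OF FD(1) lv av] .
  also have "f a = u0" unfolding a_def using FD(5)[OF u0v] .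
  finally have Fu: "(\<lambda>i. F u0 i + u0 i) = f l" by auto
  have "F u0 = (\<lambda>i. (1/3) * F (ev 1) i)" unfolding u0_def using lin_scale[OF isoD(1)[OF Fi] e1v] .
  then have "(\<lambda>i. (F (ev 1) i + ev 1 i) / 3) = (\<lambda>i. F u0 i + u0 i)" unfolding u0_def by (auto simp: field_simps)
  then have "(\<lambda>i. (F (ev 1) i + ev 1 i) / 3) \<in> lat t" using Fu FD(7)[OF ll] by simp
  then show False using LC[OF Fi FW] by simp
qed

lemma sqmono_int: fixes x y :: int assumes "0 \<le> x" "x \<le> y" shows "x^2 \<le> y^2"
  using assms by (intro power_mono) auto

lemma small3: fixes a :: int assumes "1 \<le> a" "a \<le> 2" "3 dvd a" shows False
proof -
  have "a = 1 \<or> a = 2" using assms by auto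
  then show False using assms(3) by auto
qed

lemma intI: fixes a b c k :: int
  assumes a1: "1 \<le> a" and h: "2*a + 1 \<le> 3*b" and ak: "a^2 = 3*b^2 + c^2 - k"
    and k: "k = 1 \<or> k = 3" and k3: "k = 3 \<Longrightarrow> 3 dvd a"
  shows False
proof -
  have "(2*a+1)^2 \<le> (3*b)^2" using a1 h by (intro sqmono_int) auto
  moreover have "(2*a+1)^2 = 4*a^2 + 4*a + 1" "(3*b)^2 = 9*b^2" by (simp_all add: power2_eq_square algebra_simps)
  ultimately have "4*a + 1 + 3*b^2 + 4*c^2 \<le> 4*k" using ak by linarith
  moreover have "0 \<le> b^2" "0 \<le> c^2" by simp_all
  ultimately have "4*a + 1 \<le> 4*k" by linarith
  then show False using k k3 a1 small3[of a] by auto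
qed

lemma intII: fixes a b c k :: int
  assumes a1: "1 \<le> a" and h: "a + 1 \<le> c" and ak: "a^2 = 3*b^2 + c^2 - k"
    and k: "k = 1 \<or> k = 3" and k3: "k = 3 \<Longrightarrow> 3 dvd a"
  shows False
proof -
  have "(a+1)^2 \<le> c^2" using a1 h by (intro sqmono_int) auto
  moreover have "(a+1)^2 = a^2 + 2*a + 1" by (simp add: power2_eq_square algebra_simps)
  ultimately have "2*a + 1 + 3*b^2 \<le> k" using ak by linarith
  moreover have "0 \<le> b^2" by simp
  ultimately have "2*a + 1 \<le> k" by linarith
  then show False using k k3 a1 small3[of a] by auto
qed

lemma intIII: fixes a b c k :: int
  assumes a1: "1 \<le> a" and h: "2*a + 1 \<le> 3*b + c" and ak: "a^2 = 3*b^2 + c^2 - k"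
    and k: "k = 1 \<or> k = 3" and k3: "k = 3 \<Longrightarrow> 3 dvd a"
  shows False
proof -
  have "(2*a+1)^2 \<le> (3*b+c)^2" using a1 h by (intro sqmono_int) auto
  moreover have "(2*a+1)^2 = 4*a^2 + 4*a + 1" "(3*b+c)^2 = 9*b^2 + 6*(b*c) + c^2"
    by (simp_all add: power2_eq_square algebra_simps)
  moreover have "(b - c)^2 = b^2 - 2*(b*c) + c^2" by (simp add: power2_eq_square algebra_simps)
  moreover have "0 \<le> (b-c)^2" by simp
  ultimately have "4*a + 1 \<le> 4*k" using ak by linarith
  then show False using k k3 a1 small3[of a] by auto
qed

lemma core_pos:
  fixes a b c k :: int and z0 z1 z2 :: real
  assumes z: "0 < z1" "2*z1 < z0" "0 \<le> z2" "c \<noteq> 0 \<Longrightarrow> 0 < z2 \<and> z1 + z2 < z0"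
    and ak: "a^2 = 3*b^2 + c^2 - k" and k: "k = 1 \<or> k = 3" and k3: "k = 3 \<Longrightarrow> 3 dvd a"
    and a1: "1 \<le> a"
    and eq: "of_int a * z0 = 3 * of_int b * z1 + of_int c * z2"
  shows False
proof -
  have z0: "0 < z0" using z by linarith
  have az: "of_int a * z0 > 0" using a1 z0 by simp
  consider "c \<le> 0" | "c > 0 \<and> 3*b - c \<le> 0" | "c > 0 \<and> 3*b - c > 0" by linarith
  then show False
  proof cases
    case 1
    have "of_int c * z2 \<le> 0" using 1 z(3) by (simp add: mult_nonpos_nonneg)
    then have le: "of_int a * z0 \<le> 3 * of_int b * z1" using eq by linarith
    have b0: "b > 0"
    proof (rule ccontr)
      assume "\<not> b > 0"
      then have "3 * of_int b * z1 \<le> 0" using z(1) by (simp add: mult_nonpos_nonneg)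
      then show False using le az by linarith
    qed
    have "3 * of_int b * z1 < 3 * of_int b * (z0 / 2)" using b0 z(2) by simp
    then have "of_int a * z0 < (3 * of_int b / 2) * z0" using le by (simp add: algebra_simps)
    then have "of_int a < (3 * of_int b / 2 :: real)" using z0 by (simp add: mult_less_cancel_right)
    then have "2 * a < 3 * b" by linarith
    then show False using intI[OF a1 _ ak k k3] by linarith
  next
    case 2
    have zz: "0 < z2 \<and> z1 + z2 < z0" using z(4) 2 by simp
    have "of_int c * z2 < of_int c * (z0 - z1)" using 2 zz by simp
    moreover have "(3 * of_int b - of_int c) * z1 \<le> 0" using 2 z(1) by (simp add: mult_nonpos_nonneg)
    ultimately have "of_int a * z0 < of_int c * z0" using eq by (simp add: algebra_simps)
    then have "a < c" using z0 by (simp add: mult_less_cancel_right)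
    then show False using intII[OF a1 _ ak k k3] by linarith
  next
    case 3
    have zz: "0 < z2 \<and> z1 + z2 < z0" using z(4) 3 by simp
    have "of_int c * z2 < of_int c * (z0 - z1)" using 3 zz by simp
    moreover have "(3 * of_int b - of_int c) * z1 < (3 * of_int b - of_int c) * (z0 / 2)"
      using 3 z(2) by (intro mult_strict_left_mono) auto
    moreover have "of_int c * z2 + 3 * of_int b * z1 = of_int c * (z2 + z1) + (3 * of_int b - of_int c) * z1"
      by (simp add: algebra_simps)
    moreover have "of_int c * (z0 - z1) + of_int c * z1 = of_int c * z0" by (simp add: algebra_simps)
    moreover have "of_int c * z2 < of_int c * (z0 - z1)" using 3 zz by simp
    ultimately have "of_int a * z0 < of_int c * z0 + (3 * of_int b - of_int c) * (z0 / 2)"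
      using eq by (simp add: algebra_simps)
    also have "\<dots> = (of_int c + (3 * of_int b - of_int c) / 2) * z0" by (simp add: field_simps)
    finally have "of_int a * z0 < (of_int c + (3 * of_int b - of_int c) / 2) * z0" .
    then have "of_int a < (of_int c + (3 * of_int b - of_int c) / 2 :: real)" using z0 by (simp add: mult_less_cancel_right)
    then have "2 * real_of_int a < 2 * (of_int c + (3 * of_int b - of_int c) / 2)" by (rule mult_strict_left_mono) simp
    also have "2 * (of_int c + (3 * of_int b - of_int c) / 2) = 3 * of_int b + (of_int c :: real)"
      by (simp add: field_simps)
    finally have "real_of_int (2 * a) < real_of_int (3 * b + c)" by simp
    then have "2 * a < 3 * b + c" by (simp only: of_int_less_iff)
    then show False using intIII[OF a1 _ ak k k3] by linarith
  qed
qed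

lemma core:
  fixes a b c k :: int and z0 z1 z2 :: real
  assumes z: "0 < z1" "2*z1 < z0" "0 \<le> z2" "c \<noteq> 0 \<Longrightarrow> 0 < z2 \<and> z1 + z2 < z0"
    and ak: "a^2 = 3*b^2 + c^2 - k" and k: "k = 1 \<or> k = 3" and k3: "k = 3 \<Longrightarrow> 3 dvd a"
  shows "-2 * z0 * of_int a + 6 * z1 * of_int b + 2 * z2 * of_int c \<noteq> 0"
proof
  assume e: "-2 * z0 * of_int a + 6 * z1 * of_int b + 2 * z2 * of_int c = 0"
  consider "a = 0" | "a \<ge> 1" | "a \<le> -1" by linarith
  then show False
  proof cases
    case 1
    then have bc: "3*b^2 + c^2 = k" using ak by simp
    show False
    proof (cases "b = 0")
      case True
      then have "c \<noteq> 0" using bc k by auto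
      then have "0 < z2" using z(4) by simp
      then show False using e True 1 \<open>c \<noteq> 0\<close> by simp
    next
      case False
      then have "1 \<le> \<bar>b\<bar>" by simp
      then have "1 * 1 \<le> \<bar>b\<bar> * \<bar>b\<bar>" by (intro mult_mono) auto
      then have "1 \<le> b^2" by (simp add: power2_eq_square)
      then have "c^2 \<le> 0" using bc k by linarith
      then have "c = 0" by simp
      then show False using e False 1 z(1) by simp
    qed
  next
    case 2
    have "of_int a * z0 = 3 * of_int b * z1 + of_int c * z2" using e by (simp add: algebra_simps)
    then show False using core_pos[OF z ak k k3 2] by simp
  next
    case 3
    have ak': "(-a)^2 = 3*(-b)^2 + (-c)^2 - k" using ak by simp
    have z4': "-c \<noteq> 0 \<Longrightarrow> 0 < z2 \<and> z1 + z2 < z0" using z(4) by simp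
    have "of_int (-a) * z0 = 3 * of_int (-b) * z1 + of_int (-c) * z2" using e by (simp add: algebra_simps)
    moreover have "k = 3 \<Longrightarrow> 3 dvd (-a)" using k3 by simp
    ultimately show False using core_pos[OF z(1,2,3) z4' ak' k] 3 by simp
  qed
qed

lemma sq9: fixes z :: int assumes "0 < z" "z^2 = 9" shows "z = 3"
proof -
  have "(z - 3) * (z + 3) = 0" using assms(2) by (simp add: power2_eq_square algebra_simps)
  then show ?thesis using assms(1) by auto
qed

lemma uniq1: fixes z0 z1 z2 :: int
  assumes "1 \<le> z1" "1 \<le> z2" "z1 + z2 + 1 \<le> z0" "2*z1 + 1 \<le> z0" "z0^2 = 3*z1^2 + z2^2 + 5"
  shows "z0 = 3 \<and> z1 = 1 \<and> z2 = 1"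
proof -
  have A: "(z1+z2+1)^2 \<le> z0^2" using assms by (intro sqmono_int) auto
  have B: "(2*z1+1)^2 \<le> z0^2" using assms by (intro sqmono_int) auto
  have eA: "(z1+z2+1)^2 = z1^2 + z2^2 + 1 + 2*(z1*z2) + 2*z1 + 2*z2" by (simp add: power2_eq_square algebra_simps)
  have eB: "(2*z1+1)^2 = 4*z1^2 + 4*z1 + 1" by (simp add: power2_eq_square algebra_simps)
  have 12: "z1 = 1 \<and> z2 = 1"
  proof (cases "z1 \<le> z2")
    case True
    have "z1 * z1 \<le> z1 * z2" using True assms(1) by (intro mult_left_mono) auto
    then have "z1^2 \<le> z1 * z2" by (simp add: power2_eq_square)
    then show ?thesis using A eA assms by linarith
  next
    case False
    have "z2^2 \<le> (z1 - 1)^2" using False assms(2) by (intro sqmono_int) auto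
    moreover have "(z1 - 1)^2 = z1^2 - 2*z1 + 1" by (simp add: power2_eq_square algebra_simps)
    ultimately show ?thesis using B eB assms by linarith
  qed
  then have "z0^2 = 9" using assms(5) by simp
  then have "z0 = 3" using sq9 assms by simp
  then show ?thesis using 12 by simp
qed

lemma uniq0: fixes z0 z1 :: int
  assumes "1 \<le> z1" "2*z1 + 1 \<le> z0" "z0^2 = 3*z1^2 + 6"
  shows "z0 = 3 \<and> z1 = 1"
proof -
  have B: "(2*z1+1)^2 \<le> z0^2" using assms by (intro sqmono_int) auto
  have eB: "(2*z1+1)^2 = 4*z1^2 + 4*z1 + 1" by (simp add: power2_eq_square algebra_simps)
  have "1 * z1 \<le> z1 * z1" using assms(1) by (intro mult_right_mono) auto
  then have "z1 \<le> z1^2" by (simp add: power2_eq_square)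
  then have "z1 = 1" using B eB assms by linarith
  then have "z0^2 = 9" using assms(3) by simp
  then show ?thesis using sq9 assms \<open>z1 = 1\<close> by simp
qed

lemma uniq_u: fixes u0 u1 u2 :: int
  assumes l: "-6*u0 + 6*u1 + 2*u2 = 2" and n: "-2*u0^2 + 6*u1^2 + 2*u2^2 = 2"
  shows "u0 = 0 \<and> u1 = 0 \<and> u2 = 1"
proof -
  define s where "s = u1 - u0"
  have e0: "u0 = u1 - s" and e2: "u2 = 1 - 3*s" using l unfolding s_def by auto
  have "-2*(u1-s)^2 + 6*u1^2 + 2*(1-3*s)^2 = 2" using n unfolding e0[symmetric] e2[symmetric] .
  moreover have "-2*(u1-s)^2 + 6*u1^2 + 2*(1-3*s)^2 - 2 = (2*u1+s)^2 + 15*s^2 - 12*s"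
    by (simp add: power2_eq_square algebra_simps)
  ultimately have E: "(2*u1+s)^2 + 15*s^2 - 12*s = 0" by linarith
  have P: "0 \<le> (2*u1+s)^2" by simp
  have s0: "s = 0"
  proof (rule ccontr)
    assume "s \<noteq> 0"
    then consider "1 \<le> s" | "s \<le> -1" by linarith
    then show False
    proof cases
      case 1
      have "1 * s \<le> s * s" using 1 by (intro mult_right_mono) auto
      then have "s \<le> s^2" by (simp add: power2_eq_square)
      then show False using E P 1 by linarith
    next
      case 2
      have "0 \<le> s^2" by simp
      then show False using E P 2 by linarith
    qed
  qed
  then have "(2*u1)^2 = 0" using E by simp
  then have "u1 = 0" by simp
  then show ?thesis using e0 e2 s0 by simp
qed

lemma sol_w: fixes w0 w1 :: int
  assumes l: "-6*w0 + 6*w1 = 6" and n: "-2*w0^2 + 6*w1^2 = 6"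
  shows "w1 = 1 \<or> w1 = -2"
proof -
  have e: "w1 = w0 + 1" using l by simp
  have "-2*w0^2 + 6*(w0+1)^2 = 6" using n unfolding e .
  then have "4 * (w0 * (w0 + 3)) = 0" by (simp add: power2_eq_square algebra_simps)
  then have "w0 = 0 \<or> w0 = -3" by auto
  then show ?thesis using e by auto
qed

lemma not_int_third: fixes w :: int assumes "w = 1 \<or> w = -2" shows "(of_int w + 1) / 3 \<notin> (\<int> :: real set)"
proof
  assume "(of_int w + 1) / 3 \<in> (\<int> :: real set)"
  then obtain m :: int where "(of_int w + 1) / 3 = (of_int m :: real)" by (metis Ints_cases)
  then have "real_of_int (w + 1) = real_of_int (3 * m)" by simp
  then have "w + 1 = 3 * m" by (simp only: of_int_eq_iff)
  then show False using assms by presburger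
qed

lemma v3_vecs: "t \<le> 1 \<Longrightarrow> (t = 0 \<Longrightarrow> c = 0) \<Longrightarrow> v3 a b c \<in> vecs t"
  by (cases "t = 0") (auto simp: vecs_def v3_def dimL_def)

lemma v3_lat: "t \<le> 1 \<Longrightarrow> (t = 0 \<Longrightarrow> c = 0) \<Longrightarrow> a \<in> \<int> \<Longrightarrow> b \<in> \<int> \<Longrightarrow> c \<in> \<int> \<Longrightarrow> v3 a b c \<in> lat t"
  by (rule latI[OF v3_vecs]) (auto simp: v3_def)

lemma v3_app [simp]: "v3 a b c 0 = a" "v3 a b c 1 = b" "v3 a b c (Suc 0) = b" "v3 a b c 2 = c" by (simp_all add: v3_def)

lemma form_v3: "t \<le> 1 \<Longrightarrow> (t = 0 \<Longrightarrow> c = 0) \<Longrightarrow> form t (v3 a b c) z = -2*a*z 0 + 6*b*z 1 + 2*c*z 2"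
  using form01[OF _ v3_vecs] by (simp add: v3_app)

lemma form_v3': "t \<le> 1 \<Longrightarrow> (t = 0 \<Longrightarrow> c = 0) \<Longrightarrow> form t z (v3 a b c) = -2*a*z 0 + 6*b*z 1 + 2*c*z 2"
  using form_v3 form_sym by metis

lemma lat_ints: assumes t: "t \<le> 1" and z: "z \<in> lat t"
  shows "\<exists>a b c::int. z = v3 (of_int a) (of_int b) (of_int c) \<and> (t = 0 \<longrightarrow> c = 0)"
proof -
  have zi: "z i = of_int \<lfloor>z i\<rfloor>" if "i < 3" for i
    using lat01_int[OF t z that] by (metis Ints_cases floor_of_int)
  have "z = v3 (z 0) (z 1) (z 2)" using vecs01_eq[OF t lat_vecs[OF z]] .
  also have "\<dots> = v3 (of_int \<lfloor>z 0\<rfloor>) (of_int \<lfloor>z 1\<rfloor>) (of_int \<lfloor>z 2\<rfloor>)"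
    using zi[of 0] zi[of 1] zi[of 2] by simp
  finally have e: "z = v3 (of_int \<lfloor>z 0\<rfloor>) (of_int \<lfloor>z 1\<rfloor>) (of_int \<lfloor>z 2\<rfloor>)" .
  have "t = 0 \<longrightarrow> \<lfloor>z 2\<rfloor> = 0" using z by (auto simp: lat_def vecs_def dimL_def)
  then show ?thesis using e by blast
qed

lemma ev_v3: "ev 0 = v3 1 0 0" "ev 1 = v3 0 1 0" "ev 2 = v3 0 0 1" "ev (Suc 0) = v3 0 1 0"
  by (auto simp: ev_def v3_def)

lemma root_v3:
  fixes a b c :: int
  assumes t: "t \<le> 1" and c0: "t = 0 \<Longrightarrow> c = 0"
    and n: "-2*a^2 + 6*b^2 + 2*c^2 = 2 \<or> (-2*a^2 + 6*b^2 + 2*c^2 = 6 \<and> 3 dvd a \<and> 3 dvd c)"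
  shows "is_root t (v3 (of_int a) (of_int b) (of_int c))"
proof -
  have c0': "t = 0 \<Longrightarrow> real_of_int c = 0" using c0 by simp
  have l: "v3 (of_int a) (of_int b) (of_int c) \<in> lat t" by (rule v3_lat[OF t c0']) auto
  have f: "form t (v3 (of_int a) (of_int b) (of_int c)) (v3 (of_int a) (of_int b) (of_int c))
      = of_int (-2*a^2 + 6*b^2 + 2*c^2)"
    using form_v3[OF t c0'] by (simp add: v3_app power2_eq_square)
  show ?thesis
  proof (cases "-2*a^2 + 6*b^2 + 2*c^2 = 2")
    case True then show ?thesis unfolding is_root_def f True using l by simp
  next
    case False
    then have n6: "-2*a^2 + 6*b^2 + 2*c^2 = 6" and d: "3 dvd a" "3 dvd c" using n by auto
    obtain a' c' where a': "a = 3 * a'" and c': "c = 3 * c'" using d by (auto elim!: dvdE)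
    have "\<exists>k::int. form t (v3 (of_int a) (of_int b) (of_int c)) y = 3 * of_int k" if y: "y \<in> lat t" for y
    proof -
      obtain y0 y1 y2 :: int where ye: "y = v3 (of_int y0) (of_int y1) (of_int y2)"
        using lat_ints[OF t y] by blast
      have "form t (v3 (of_int a) (of_int b) (of_int c)) y = -2 * of_int a * of_int y0 + 6 * of_int b * of_int y1 + 2 * of_int c * of_int y2"
        using form_v3[OF t c0'] unfolding ye by simp
      also have "\<dots> = 3 * of_int (-2*a'*y0 + 2*b*y1 + 2*c'*y2)" by (simp add: a' c' algebra_simps)
      finally have "form t (v3 (of_int a) (of_int b) (of_int c)) y = 3 * of_int (-2*a'*y0 + 2*b*y1 + 2*c'*y2)" .
      then show ?thesis by blast
    qed
    then show ?thesis unfolding is_root_def f n6 using l by simp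
  qed
qed

lemma A1gen:
  assumes t: "t \<le> 1" and z: "z \<in> vecs t" and z1: "0 < z 1" and z01: "2 * z 1 < z 0"
    and z2: "t = 1 \<Longrightarrow> 0 < z 2 \<and> z 1 + z 2 < z 0"
  shows "form t z z < 0 \<and> (\<forall>v. is_root t v \<longrightarrow> form t z v \<noteq> 0)"
proof -
  have z2t0: "t = 0 \<Longrightarrow> z 2 = 0" using z by (simp add: vecs_def dimL_def)
  have z2nn: "0 \<le> z 2" using z2 z2t0 t by (cases "t = 0") auto
  have fzz: "form t z z = -2 * (z 0)^2 + 6 * (z 1)^2 + 2 * (z 2)^2"
    using form01[OF t z] by (simp add: power2_eq_square)
  have neg: "form t z z < 0"
  proof (cases "t = 0")
    case True
    have "z 1 * z 1 < (z 0 / 2) * (z 0 / 2)" using z1 z01 by (intro mult_strict_mono) auto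
    then have "4 * (z 1)^2 < (z 0)^2" by (simp add: power2_eq_square field_simps)
    moreover have "0 \<le> (z 0)^2" by simp
    ultimately have "3 * (z 1)^2 < (z 0)^2" using zero_le_power2[of "z 1"] by linarith
    then show ?thesis using fzz z2t0[OF True] by simp
  next
    case False
    then have t1: "t = 1" using t by simp
    note zz = z2[OF t1]
    have "z 2 * z 2 < (z 0 - z 1) * (z 0 - z 1)" using zz by (intro mult_strict_mono) auto
    moreover have "z 1 * (2 * z 1 - z 0) < 0" using z1 z01 by (simp add: mult_pos_neg)
    ultimately show ?thesis using fzz by (simp add: power2_eq_square algebra_simps)
  qed
  have gen: "form t z v \<noteq> 0" if r: "is_root t v" for v
  proof -
    obtain a b c :: int where ve: "v = v3 (of_int a) (of_int b) (of_int c)" and c0: "t = 0 \<longrightarrow> c = 0"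
      using lat_ints[OF t root_lat[OF r]] by blast
    have c0': "t = 0 \<Longrightarrow> real_of_int c = 0" using c0 by simp
    have "form t z v = -2 * of_int a * z 0 + 6 * of_int b * z 1 + 2 * of_int c * z 2"
      unfolding ve by (rule form_v3'[OF t c0'])
    then have fzv: "form t z v = -2 * z 0 * of_int a + 6 * z 1 * of_int b + 2 * z 2 * of_int c"
      by (simp add: algebra_simps)
    have nv: "form t v v = of_int (-2*a^2 + 6*b^2 + 2*c^2)"
      unfolding ve using form_v3[OF t c0'] by (simp add: v3_app power2_eq_square)
    define X where "X = -2*a^2 + 6*b^2 + 2*c^2"
    have "real_of_int X = 2 \<or> real_of_int X = 6" using root_norm[OF r] nv unfolding X_def by simp
    then have n: "-2*a^2 + 6*b^2 + 2*c^2 = 2 \<or> -2*a^2 + 6*b^2 + 2*c^2 = 6"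
      unfolding X_def[symmetric] by (simp only: of_int_eq_numeral_iff)
    have d: "3 dvd a" if n6: "-2*a^2 + 6*b^2 + 2*c^2 = 6"
    proof -
      have "form t v v = 6" unfolding nv n6 by simp
      then obtain k :: int where k: "form t v (ev 0) = 3 * of_int k"
        using r ev_lat[of 0 t] unfolding is_root_def by (auto simp: dimL_def)
      have "form t v (ev 0) = -2 * of_int a" unfolding ve ev_v3 using form_v3[OF t c0'] by (simp add: v3_app)
      then have "real_of_int (-2 * a) = real_of_int (3 * k)" using k by simp
      then have "-2 * a = 3 * k" by (simp only: of_int_eq_iff)
      then show ?thesis by presburger
    qed
    define k :: int where "k = (if -2*a^2 + 6*b^2 + 2*c^2 = 2 then 1 else 3)"
    have ak: "a^2 = 3*b^2 + c^2 - k" using n unfolding k_def by auto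
    have kk: "k = 1 \<or> k = 3" unfolding k_def by auto
    have k3: "k = 3 \<Longrightarrow> 3 dvd a" using d n unfolding k_def by (auto split: if_splits)
    have zc: "c \<noteq> 0 \<Longrightarrow> 0 < z 2 \<and> z 1 + z 2 < z 0"
    proof -
      assume "c \<noteq> 0"
      then have "t = 1" using c0 t by auto
      then show ?thesis using z2 by simp
    qed
    show ?thesis unfolding fzv using core[OF z1 z01 z2nn zc ak kk k3] by simp
  qed
  show ?thesis using neg gen by blast
qed

definition r1 :: "nat \<Rightarrow> real" where "r1 = v3 0 (-1) 0"
definition r2 :: "nat \<Rightarrow> real" where "r2 = v3 0 0 (-1)"
definition r3 :: "nat \<Rightarrow> real" where "r3 = v3 3 1 3"
definition r4 :: "nat \<Rightarrow> real" where "r4 = v3 3 2 0"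
definition p1 :: "nat \<Rightarrow> real" where "p1 = v3 3 1 1"
definition p0 :: "nat \<Rightarrow> real" where "p0 = v3 3 1 0"

lemma r1_root: assumes t: "t \<le> 1" shows "is_root t r1"
proof -
  have "is_root t (v3 (of_int 0) (of_int (-1)) (of_int 0))" by (rule root_v3) (use t in auto)
  then show ?thesis unfolding r1_def by simp
qed
lemma r4_root: assumes t: "t \<le> 1" shows "is_root t r4"
proof -
  have "is_root t (v3 (of_int 3) (of_int 2) (of_int 0))" by (rule root_v3) (use t in auto)
  then show ?thesis unfolding r4_def by simp
qed
lemma r2_root: "is_root 1 r2"
proof -
  have "is_root 1 (v3 (of_int 0) (of_int 0) (of_int (-1)))" by (rule root_v3) auto
  then show ?thesis unfolding r2_def by simp
qed
lemma r3_root: "is_root 1 r3"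
proof -
  have "is_root 1 (v3 (of_int 3) (of_int 1) (of_int 3))" by (rule root_v3) auto
  then show ?thesis unfolding r3_def by simp
qed

lemma form_v3v3: "t \<le> 1 \<Longrightarrow> (t = 0 \<Longrightarrow> c = 0) \<Longrightarrow> form t (v3 a b c) (v3 a' b' c') = -2*a*a' + 6*b*b' + 2*c*c'"
  by (simp add: form_v3)

lemma wall1: "t \<le> 1 \<Longrightarrow> form t z r1 = -6 * z 1" unfolding r1_def using form_v3'[of t 0 z 0 "-1"] by simp
lemma wall4: "t \<le> 1 \<Longrightarrow> form t z r4 = -6 * z 0 + 12 * z 1" unfolding r4_def using form_v3'[of t 0 z 3 2] by simp
lemma wall2: "form 1 z r2 = -2 * z 2" unfolding r2_def using form_v3'[of 1 "-1" z 0 0] by simp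
lemma wall3: "form 1 z r3 = -6 * z 0 + 6 * z 1 + 6 * z 2" unfolding r3_def using form_v3'[of 1 3 z 3 1] by simp

lemma int_lt: fixes x y :: int shows "real_of_int x < real_of_int y \<Longrightarrow> x < y" by simp

lemma chiral1: "chiral 1"
proof (rule chiral_main[where p = p1 and W = "{r1, r2, r3, r4}"])
  show t: "(1::nat) \<le> 1" by simp
  show "p1 \<in> lat 1" unfolding p1_def by (rule v3_lat) auto
  show "form 1 p1 p1 < 0" unfolding p1_def using form_v3[of 1 1 3 1] by simp
  show "\<forall>r\<in>{r1, r2, r3, r4}. is_root 1 r \<and> form 1 p1 r < 0"
    using r1_root[OF t] r2_root r3_root r4_root[OF t] wall1[OF t] wall2 wall3 wall4[OF t]
    by (auto simp: p1_def)
  show "form 1 z z < 0 \<and> form 1 p1 z < 0 \<and> (\<forall>v. is_root 1 v \<longrightarrow> form 1 z v \<noteq> 0)"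
    if z: "z \<in> vecs 1" and W: "\<forall>r\<in>{r1, r2, r3, r4}. form 1 z r < 0" for z
  proof -
    have w: "form 1 z r1 < 0" "form 1 z r2 < 0" "form 1 z r3 < 0" "form 1 z r4 < 0" using W by auto
    have c: "0 < z 1" "2 * z 1 < z 0" "0 < z 2 \<and> z 1 + z 2 < z 0"
      using w wall1[OF t] wall2 wall3 wall4[OF t] by auto
    have "form 1 p1 z = -6 * z 0 + 6 * z 1 + 2 * z 2" unfolding p1_def using form_v3[of 1 1 3 1] by simp
    then have "form 1 p1 z < 0" using c by linarith
    then show ?thesis using A1gen[OF t z c(1,2)] c(3) by blast
  qed
  show "(\<lambda>i. (F (ev 1) i + ev 1 i) / 3) \<notin> lat 1"
    if Fi: "iso 1 F F'" and FW: "\<forall>r\<in>{r1, r2, r3, r4}. form 1 (F p1) r < 0" for F F'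
  proof
    assume tgt: "(\<lambda>i. (F (ev 1) i + ev 1 i) / 3) \<in> lat 1"
    note D = isoD[OF Fi]
    have p1l: "p1 \<in> lat 1" unfolding p1_def by (rule v3_lat) auto
    have p1v: "p1 \<in> vecs 1" using lat_vecs[OF p1l] .
    have e1v: "ev 1 \<in> vecs 1" and e2v: "ev 2 \<in> vecs 1" by (auto intro: ev_vecs simp: dimL_def)
    have e1l: "ev 1 \<in> lat 1" and e2l: "ev 2 \<in> lat 1" by (auto intro: ev_lat simp: dimL_def)
    obtain z0 z1 z2 :: int where qe: "F p1 = v3 (of_int z0) (of_int z1) (of_int z2)"
      using lat_ints[OF t D(7)[OF p1l]] by blast
    have w: "form 1 (F p1) r1 < 0" "form 1 (F p1) r2 < 0" "form 1 (F p1) r3 < 0" "form 1 (F p1) r4 < 0"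
      using FW by auto
    have "real_of_int 0 < real_of_int z1" using w(1) wall1[OF t] qe by simp
    then have i1: "1 \<le> z1" by linarith
    have "real_of_int 0 < real_of_int z2" using w(2) wall2 qe by simp
    then have i2: "1 \<le> z2" by linarith
    have "real_of_int (z1 + z2) < real_of_int z0" using w(3) wall3 qe by simp
    then have i3: "z1 + z2 + 1 \<le> z0" by linarith
    have "real_of_int (2 * z1) < real_of_int z0" using w(4) wall4[OF t] qe by simp
    then have i4: "2 * z1 + 1 \<le> z0" by linarith
    have "form 1 (F p1) (F p1) = form 1 p1 p1" using D(6)[OF p1v p1v] .
    then have "form 1 (v3 (of_int z0) (of_int z1) (of_int z2)) (v3 (of_int z0) (of_int z1) (of_int z2)) = form 1 p1 p1"
      unfolding qe .
    then have "real_of_int (-2*z0^2 + 6*z1^2 + 2*z2^2) = real_of_int (-10)"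
      by (simp add: form_v3v3 p1_def power2_eq_square)
    then have "-2*z0^2 + 6*z1^2 + 2*z2^2 = -10" by (simp only: of_int_eq_iff)
    then have "z0^2 = 3*z1^2 + z2^2 + 5" by simp
    then have "z0 = 3 \<and> z1 = 1 \<and> z2 = 1" using uniq1 i1 i2 i3 i4 by blast
    then have Fp: "F p1 = p1" using qe by (simp add: p1_def[symmetric])
    obtain u0 u1 u2 :: int where ue: "F (ev 2) = v3 (of_int u0) (of_int u1) (of_int u2)"
      using lat_ints[OF t D(7)[OF e2l]] by blast
    have "form 1 (F p1) (F (ev 2)) = form 1 p1 (ev 2)" using D(6)[OF p1v e2v] .
    then have "form 1 p1 (v3 (of_int u0) (of_int u1) (of_int u2)) = form 1 p1 (ev 2)" unfolding Fp ue .
    then have "real_of_int (-6*u0 + 6*u1 + 2*u2) = real_of_int 2"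
      by (simp add: form_v3v3 p1_def ev_v3)
    then have l1: "-6*u0 + 6*u1 + 2*u2 = 2" by (simp only: of_int_eq_iff)
    have "form 1 (F (ev 2)) (F (ev 2)) = form 1 (ev 2) (ev 2)" using D(6)[OF e2v e2v] .
    then have "form 1 (v3 (of_int u0) (of_int u1) (of_int u2)) (v3 (of_int u0) (of_int u1) (of_int u2)) = form 1 (ev 2) (ev 2)"
      unfolding ue .
    then have "real_of_int (-2*u0^2 + 6*u1^2 + 2*u2^2) = real_of_int 2"
      by (simp add: form_v3v3 ev_v3 power2_eq_square)
    then have n1: "-2*u0^2 + 6*u1^2 + 2*u2^2 = 2" by (simp only: of_int_eq_iff)
    have "u0 = 0 \<and> u1 = 0 \<and> u2 = 1" using uniq_u[OF l1 n1] .
    then have Fe2: "F (ev 2) = v3 0 0 1" unfolding ue by simp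
    obtain w0 w1 w2 :: int where we: "F (ev 1) = v3 (of_int w0) (of_int w1) (of_int w2)"
      using lat_ints[OF t D(7)[OF e1l]] by blast
    have "form 1 (F (ev 2)) (F (ev 1)) = form 1 (ev 2) (ev 1)" using D(6)[OF e2v e1v] .
    then have "form 1 (v3 0 0 1) (v3 (of_int w0) (of_int w1) (of_int w2)) = form 1 (ev 2) (ev 1)"
      unfolding Fe2 we .
    then have "real_of_int w2 = 0" by (simp add: form_v3v3 ev_v3)
    then have w20: "w2 = 0" by simp
    have "form 1 (F p1) (F (ev 1)) = form 1 p1 (ev 1)" using D(6)[OF p1v e1v] .
    then have "form 1 p1 (v3 (of_int w0) (of_int w1) (of_int w2)) = form 1 p1 (ev 1)" unfolding Fp we .
    then have "real_of_int (-6*w0 + 6*w1) = real_of_int 6"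
      by (simp add: form_v3v3 p1_def ev_v3 w20)
    then have l2: "-6*w0 + 6*w1 = 6" by (simp only: of_int_eq_iff)
    have "form 1 (F (ev 1)) (F (ev 1)) = form 1 (ev 1) (ev 1)" using D(6)[OF e1v e1v] .
    then have "form 1 (v3 (of_int w0) (of_int w1) (of_int w2)) (v3 (of_int w0) (of_int w1) (of_int w2)) = form 1 (ev 1) (ev 1)"
      unfolding we .
    then have "real_of_int (-2*w0^2 + 6*w1^2) = real_of_int 6"
      by (simp add: form_v3v3 ev_v3 power2_eq_square w20)
    then have n2: "-2*w0^2 + 6*w1^2 = 6" by (simp only: of_int_eq_iff)
    have ww: "w1 = 1 \<or> w1 = -2" using sol_w[OF l2 n2] .
    have "(F (ev 1) 1 + ev 1 1) / 3 \<in> \<int>" using latD[OF tgt, of 1] by (simp add: dimL_def)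
    then have "(of_int w1 + 1) / 3 \<in> (\<int> :: real set)" unfolding we by (simp add: ev_def)
    then show False using not_int_third[OF ww] by simp
  qed
qed


lemma chiral0: "chiral 0"
proof (rule chiral_main[where p = p0 and W = "{r1, r4}"])
  show t: "(0::nat) \<le> 1" by simp
  show p0l: "p0 \<in> lat 0" unfolding p0_def by (rule v3_lat) auto
  show "form 0 p0 p0 < 0" unfolding p0_def using form_v3v3[of 0 0 3 1 3 1 0] by simp
  show "\<forall>r\<in>{r1, r4}. is_root 0 r \<and> form 0 p0 r < 0"
    using r1_root[OF t] r4_root[OF t] wall1[OF t] wall4[OF t]
    by (auto simp: p0_def)
  show "form 0 z z < 0 \<and> form 0 p0 z < 0 \<and> (\<forall>v. is_root 0 v \<longrightarrow> form 0 z v \<noteq> 0)"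
    if z: "z \<in> vecs 0" and W: "\<forall>r\<in>{r1, r4}. form 0 z r < 0" for z
  proof -
    have w: "form 0 z r1 < 0" "form 0 z r4 < 0" using W by auto
    have c: "0 < z 1" "2 * z 1 < z 0"
      using w wall1[OF t] wall4[OF t] by auto
    have "form 0 p0 z = -6 * z 0 + 6 * z 1" unfolding p0_def using form_v3[of 0 0 3 1] by simp
    then have "form 0 p0 z < 0" using c by linarith
    then show ?thesis using A1gen[OF t z c(1,2)] by simp
  qed
  show "(\<lambda>i. (F (ev 1) i + ev 1 i) / 3) \<notin> lat 0"
    if Fi: "iso 0 F F'" and FW: "\<forall>r\<in>{r1, r4}. form 0 (F p0) r < 0" for F F'
  proof
    assume tgt: "(\<lambda>i. (F (ev 1) i + ev 1 i) / 3) \<in> lat 0"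
    note D = isoD[OF Fi]
    have p0v: "p0 \<in> vecs 0" using lat_vecs[OF p0l] .
    have e1v: "ev 1 \<in> vecs 0" by (auto intro: ev_vecs simp: dimL_def)
    have e1l: "ev 1 \<in> lat 0" by (auto intro: ev_lat simp: dimL_def)
    obtain z0 z1 z2 :: int where qe': "F p0 = v3 (of_int z0) (of_int z1) (of_int z2)" and "0 = 0 \<longrightarrow> z2 = 0"
      using lat_ints[OF t D(7)[OF p0l]] by blast
    then have qe: "F p0 = v3 (of_int z0) (of_int z1) 0" by simp
    have w: "form 0 (F p0) r1 < 0" "form 0 (F p0) r4 < 0" using FW by auto
    have "real_of_int 0 < real_of_int z1" using w(1) wall1[OF t] qe by simp
    then have i1: "1 \<le> z1" by linarith
    have "real_of_int (2 * z1) < real_of_int z0" using w(2) wall4[OF t] qe by simp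
    then have i4: "2 * z1 + 1 \<le> z0" by linarith
    have "form 0 (F p0) (F p0) = form 0 p0 p0" using D(6)[OF p0v p0v] .
    then have "form 0 (v3 (of_int z0) (of_int z1) 0) (v3 (of_int z0) (of_int z1) 0) = form 0 p0 p0"
      unfolding qe .
    then have "real_of_int (-2*z0^2 + 6*z1^2) = real_of_int (-12)"
      by (simp add: form_v3v3 p0_def power2_eq_square)
    then have "-2*z0^2 + 6*z1^2 = -12" by (simp only: of_int_eq_iff)
    then have "z0^2 = 3*z1^2 + 6" by simp
    then have "z0 = 3 \<and> z1 = 1" using uniq0 i1 i4 by blast
    then have Fp: "F p0 = p0" using qe by (simp add: p0_def[symmetric])
    obtain w0 w1 w2 :: int where we': "F (ev 1) = v3 (of_int w0) (of_int w1) (of_int w2)" and "0 = 0 \<longrightarrow> w2 = 0"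
      using lat_ints[OF t D(7)[OF e1l]] by blast
    then have we: "F (ev 1) = v3 (of_int w0) (of_int w1) 0" by simp
    have "form 0 (F p0) (F (ev 1)) = form 0 p0 (ev 1)" using D(6)[OF p0v e1v] .
    then have "form 0 p0 (v3 (of_int w0) (of_int w1) 0) = form 0 p0 (ev 1)" unfolding Fp we .
    then have "real_of_int (-6*w0 + 6*w1) = real_of_int 6"
      by (simp add: form_v3v3 p0_def ev_v3)
    then have l2: "-6*w0 + 6*w1 = 6" by (simp only: of_int_eq_iff)
    have "form 0 (F (ev 1)) (F (ev 1)) = form 0 (ev 1) (ev 1)" using D(6)[OF e1v e1v] .
    then have "form 0 (v3 (of_int w0) (of_int w1) 0) (v3 (of_int w0) (of_int w1) 0) = form 0 (ev 1) (ev 1)"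
      unfolding we .
    then have "real_of_int (-2*w0^2 + 6*w1^2) = real_of_int 6"
      by (simp add: form_v3v3 ev_v3 power2_eq_square)
    then have n2: "-2*w0^2 + 6*w1^2 = 6" by (simp only: of_int_eq_iff)
    have ww: "w1 = 1 \<or> w1 = -2" using sol_w[OF l2 n2] .
    have "(F (ev 1) 1 + ev 1 1) / 3 \<in> \<int>" using latD[OF tgt, of 1] by (simp add: dimL_def)
    then have "(of_int w1 + 1) / 3 \<in> (\<int> :: real set)" unfolding we by (simp add: ev_def)
    then show False using not_int_third[OF ww] by simp
  qed
qed

theorem proposition4p6:
  fixes t :: nat
  assumes "t \<le> 9"
  shows "(t \<le> 1 \<longrightarrow> chiral t) \<and> (2 \<le> t \<longrightarrow> achiral t)"
proof (intro conjI impI)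
  assume "t \<le> 1"
  then have "t = 0 \<or> t = 1" by auto
  then show "chiral t" using chiral0 chiral1 by auto
next
  assume "2 \<le> t"
  then show "achiral t" using achiral_ge2 assms by blast
qed

end
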